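(* Let $R$ be a localizable partially ordered commutative ring with $\mathbb{N}\subseteq\mathrm{Loc}(R)$. Then the kernel of the extended Gelfand transformation $\widehat{\cdot}\colon R\to\mathscr{C}_\approx(\mathcal{D}_{\mathrm{loc}}(R))$ is $\{r\in R:\ \text{there is } s\in R^+ \text{ such that } -s\le nr\le s \text{ for all } n\in\mathbb{N}\}$.
   Context: All rings are commutative with unit $1$; ring morphisms are unital. A partially ordered commutative ring is a commutative ring $R$ with a partial order $\le$ such that $r\le s$ implies $r+t\le s+t$, and whose positive cone $R^+=\{r:0\le r\}$ is closed under multiplication and contains all squares. $\mathbb{N}=\{1,2,\dots\}$, $\mathbb{N}_0=\mathbb{N}\cup\{0\}$. $\mathrm{Loc}(R)$ is the set of $s\in 1+R^+$ such that for all $r\in R$, $rs\in R^+$ implies $r\in R^+$; $R$ is localizable if for every $r$ there is $s\in\mathrm{Loc}(R)$ with $-s\le r\le s$. Admissible domains: for a topological space $Y$, a set $\mathcal{D}$ of open subsets with $Y\in\mathcal{D}$, closed under finite intersections. On $\bigcup_{A\in\mathcal{D}}\mathscr{C}(A)$, operations are pointwise on $\operatorname{dom}f\cap\operatorname{dom}g$; $f\approx g$ iff $f|_A=g|_A$ for some $A\in\mathcal{D}$, $A\subseteq\operatorname{dom}f\cap\operatorname{dom}g$; $\mathscr{C}_\approx(\mathcal{D})$ is the quotient ring. $R_{\mathrm{loc}}$: fractions $r/s$ ($r\in R$, $s\in\mathrm{Loc}(R)$), $r/s=r'/s'$ iff $rs'=r's$, usual operations, $p/q\le r/s$ iff $ps\le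 rq$. $R^{\mathrm{bd}}_{\mathrm{loc}}=\{a:\exists n\in\mathbb{N}_0,\ -n\le a\le n\}$. $\mathcal{K}(R)$: ring morphisms $\varphi\colon R^{\mathrm{bd}}_{\mathrm{loc}}\to\mathbb{R}$ with $\varphi(a)\ge0$ for $a\ge0$, weak-$*$ topology. $\mathrm{O}_{s<\infty}=\{\varphi:\varphi(1/s)>0\}$, $\mathcal{D}_{\mathrm{loc}}(R)=\{\mathrm{O}_{s<\infty}:s\in\mathrm{Loc}(R)\}$. The extended Gelfand transformation sends $r$ to the class $\widehat r$ of $r_s\colon\mathrm{O}_{s<\infty}\to\mathbb{R}$, $\varphi\mapsto\varphi(1/s)^{-1}\varphi(r/s)$, for any $s\in\mathrm{Loc}(R)$ with $r/s\in R^{\mathrm{bd}}_{\mathrm{loc}}$ (independent of $s$); it is a ring morphism. *)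

theory Defs
  imports "HOL-Analysis.Analysis"
begin

definition po_comm_ring :: "('a::comm_ring_1 \<Rightarrow> 'a \<Rightarrow> bool) \<Rightarrow> bool" where
  "po_comm_ring le \<longleftrightarrow>
     (\<forall>r. le r r) \<and> (\<forall>r s. le r s \<and> le s r \<longrightarrow> r = s) \<and>
     (\<forall>r s t. le r s \<and> le s t \<longrightarrow> le r t) \<and>
     (\<forall>r s t. le r s \<longrightarrow> le (r + t) (s + t)) \<and>
     (\<forall>r s. le 0 r \<and> le 0 s \<longrightarrow> le 0 (r * s)) \<and>
     (\<forall>r. le 0 (r * r))"

definition Loc :: "('a::comm_ring_1 \<Rightarrow> 'a \<Rightarrow> bool) \<Rightarrow> 'a set" where
  "Loc le = {s. le 0 (s - 1) \<and> (\<forall>r. le 0 (r * s) \<longrightarrow> le 0 r)}"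

definition localizable :: "('a::comm_ring_1 \<Rightarrow> 'a \<Rightarrow> bool) \<Rightarrow> bool" where
  "localizable le \<longleftrightarrow> (\<forall>r. \<exists>s\<in>Loc le. le (- s) r \<and> le r s)"

text \<open>A fraction r/s of R_loc is represented by the pair (r,s) with s in Loc(R);
  (r,s) and (r',s') denote the same fraction iff r*s' = r'*s.\<close>

definition frac_eq :: "'a::comm_ring_1 \<times> 'a \<Rightarrow> 'a \<times> 'a \<Rightarrow> bool" where
  "frac_eq p q \<longleftrightarrow> fst p * snd q = fst q * snd p"

definition frac_le :: "('a::comm_ring_1 \<Rightarrow> 'a \<Rightarrow> bool) \<Rightarrow> 'a \<times> 'a \<Rightarrow> 'a \<times> 'a \<Rightarrow> bool" where
  "frac_le le p q \<longleftrightarrow> le (fst p * snd q) (fst q * snd p)"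

definition bd_fracs :: "('a::comm_ring_1 \<Rightarrow> 'a \<Rightarrow> bool) \<Rightarrow> ('a \<times> 'a) set" where
  "bd_fracs le = {(r, s). s \<in> Loc le \<and>
      (\<exists>n::nat. frac_le le (- of_nat n, 1) (r, s) \<and> frac_le le (r, s) (of_nat n, 1))}"

text \<open>K(R): positive unital ring morphisms R_loc^bd \<rightarrow> \<real>.  A morphism is represented by a
  function on representing pairs which respects equality of fractions, is additive,
  multiplicative, unital and positive, and is extensional (0 off the bounded pairs).\<close>

definition chars :: "('a::comm_ring_1 \<Rightarrow> 'a \<Rightarrow> bool) \<Rightarrow> (('a \<times> 'a) \<Rightarrow> real) set" where
  "chars le = {\<phi>.
     (\<forall>p. p \<notin> bd_fracs le \<longrightarrow> \<phi> p = 0) \<and>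
     (\<forall>p\<in>bd_fracs le. \<forall>q\<in>bd_fracs le. frac_eq p q \<longrightarrow> \<phi> p = \<phi> q) \<and>
     \<phi> (1, 1) = 1 \<and>
     (\<forall>r s r' s'. (r, s) \<in> bd_fracs le \<and> (r', s') \<in> bd_fracs le \<longrightarrow>
        \<phi> (r * s' + r' * s, s * s') = \<phi> (r, s) + \<phi> (r', s')) \<and>
     (\<forall>r s r' s'. (r, s) \<in> bd_fracs le \<and> (r', s') \<in> bd_fracs le \<longrightarrow>
        \<phi> (r * r', s * s') = \<phi> (r, s) * \<phi> (r', s')) \<and>
     (\<forall>p\<in>bd_fracs le. frac_le le (0, 1) p \<longrightarrow> \<phi> p \<ge> 0)}"

definition O_fin :: "('a::comm_ring_1 \<Rightarrow> 'a \<Rightarrow> bool) \<Rightarrow> 'a \<Rightarrow> (('a \<times> 'a) \<Rightarrow> real) set" where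
  "O_fin le s = {\<phi> \<in> chars le. \<phi> (1, s) > 0}"

definition D_loc :: "('a::comm_ring_1 \<Rightarrow> 'a \<Rightarrow> bool) \<Rightarrow> (('a \<times> 'a) \<Rightarrow> real) set set" where
  "D_loc le = O_fin le ` Loc le"

text \<open>Partially defined functions are pairs (domain, function).  The relation \<approx> of
  C_\<approx>(D): agreement on some member of D contained in both domains.\<close>
definition approx_eq :: "'b set set \<Rightarrow> 'b set \<times> ('b \<Rightarrow> real) \<Rightarrow> 'b set \<times> ('b \<Rightarrow> real) \<Rightarrow> bool" where
  "approx_eq D f g \<longleftrightarrow> (\<exists>A\<in>D. A \<subseteq> fst f \<inter> fst g \<and> (\<forall>x\<in>A. snd f x = snd g x))"

definition gelfand_rep :: "('a::comm_ring_1 \<Rightarrow> 'a \<Rightarrow> bool) \<Rightarrow> 'a \<Rightarrow> 'a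
     \<Rightarrow> (('a \<times> 'a) \<Rightarrow> real) set \<times> ((('a \<times> 'a) \<Rightarrow> real) \<Rightarrow> real)" where
  "gelfand_rep le r s = (O_fin le s, \<lambda>\<phi>. inverse (\<phi> (1, s)) * \<phi> (r, s))"

definition ext_gelfand :: "('a::comm_ring_1 \<Rightarrow> 'a \<Rightarrow> bool) \<Rightarrow> 'a
     \<Rightarrow> (('a \<times> 'a) \<Rightarrow> real) set \<times> ((('a \<times> 'a) \<Rightarrow> real) \<Rightarrow> real)" where
  "ext_gelfand le r = gelfand_rep le r (SOME s. s \<in> Loc le \<and> (r, s) \<in> bd_fracs le)"

definition gelfand_kernel :: "('a::comm_ring_1 \<Rightarrow> 'a \<Rightarrow> bool) \<Rightarrow> 'a set" where
  "gelfand_kernel le = {r. approx_eq (D_loc le) (ext_gelfand le r) (chars le, \<lambda>_. 0)}"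

end

theory Submission
  imports Defs
begin


definition nzd :: "'a::comm_ring_1 \<Rightarrow> bool" where
  "nzd s \<longleftrightarrow> (\<forall>x. x * s = 0 \<longrightarrow> x = 0)"

lemma nzd_1[simp]: "nzd 1" by (simp add: nzd_def)
lemma nzd_mult: "nzd a \<Longrightarrow> nzd b \<Longrightarrow> nzd (a * b)"
  unfolding nzd_def by (metis mult.assoc)
lemma nzd_cancel: "nzd s \<Longrightarrow> x * s = y * s \<Longrightarrow> x = y"
  unfolding nzd_def by (metis eq_iff_diff_eq_0 left_diff_distrib)

definition qrel :: "'a::comm_ring_1 \<times> 'a \<Rightarrow> 'a \<times> 'a \<Rightarrow> bool" where
  "qrel = (\<lambda>x y. nzd (snd x) \<and> nzd (snd y) \<and> fst x * snd y = fst y * snd x)"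

lemma qrel_iff [simp]:
  "qrel x y \<longleftrightarrow> nzd (snd x) \<and> nzd (snd y) \<and> fst x * snd y = fst y * snd x"
  by (simp add: qrel_def)

lemma qrel_trans_aux:
  fixes a b a' b' a'' b'' :: "'a::comm_ring_1"
  assumes A: "a * b' = a' * b" and B: "a' * b'' = a'' * b'" and n: "nzd b'"
  shows "a * b'' = a'' * b"
proof -
  have "(a * b'') * b' = (a * b') * b''" by (simp add: ac_simps)
  also have "\<dots> = (a' * b) * b''" using A by simp
  also have "\<dots> = (a' * b'') * b" by (simp add: ac_simps)
  also have "\<dots> = (a'' * b') * b" using B by simp
  also have "\<dots> = (a'' * b) * b'" by (simp add: ac_simps)
  finally show ?thesis using n nzd_cancel by auto
qed

lemma part_equivp_qrel: "part_equivp (qrel :: 'a::comm_ring_1 \<times> 'a \<Rightarrow> _)"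
proof (rule part_equivpI)
  show "\<exists>x::'a\<times>'a. qrel x x" by (rule exI[where x="(0,1)"]) simp
  show "symp (qrel :: 'a \<times> 'a \<Rightarrow> _)" by (simp add: symp_def)
  show "transp (qrel :: 'a \<times> 'a \<Rightarrow> _)"
    unfolding transp_def qrel_iff using qrel_trans_aux by blast
qed

lemma plus_resp_aux:
  fixes a b a' b' c d c' d' :: "'a::comm_ring_1"
  assumes "a*b' = a'*b" "c*d' = c'*d"
  shows "(a*d + c*b)*(b'*d') = (a'*d' + c'*b')*(b*d)"
proof -
  have "(a*d + c*b)*(b'*d') = (a*b')*(d*d') + (c*d')*(b*b')" by (simp add: algebra_simps)
  also have "\<dots> = (a'*b)*(d*d') + (c'*d)*(b*b')" using assms by simp
  also have "\<dots> = (a'*d' + c'*b')*(b*d)" by (simp add: algebra_simps)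
  finally show ?thesis .
qed

lemma times_resp_aux:
  fixes a b a' b' c d c' d' :: "'a::comm_ring_1"
  assumes "a*b' = a'*b" "c*d' = c'*d"
  shows "(a*c)*(b'*d') = (a'*c')*(b*d)"
proof -
  have "(a*c)*(b'*d') = (a*b')*(c*d')" by (simp add: algebra_simps)
  also have "\<dots> = (a'*b)*(c'*d)" using assms by simp
  also have "\<dots> = (a'*c')*(b*d)" by (simp add: algebra_simps)
  finally show ?thesis .
qed

quotient_type (overloaded) 'a qf = "'a :: comm_ring_1 \<times> 'a" / partial: "qrel"
  by (rule part_equivp_qrel)

lift_definition QF :: "'a :: comm_ring_1 \<Rightarrow> 'a \<Rightarrow> 'a qf"
  is "\<lambda>a b. if nzd b then (a, b) else (0, 1)"
  by simp

lemma QF_cases [cases type: qf]: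
  obtains (QF) a b where "q = QF a b" "nzd b"
  by transfer auto

lemma eq_qf: "nzd b \<Longrightarrow> nzd d \<Longrightarrow> QF a b = QF c d \<longleftrightarrow> a * d = c * b"
  by transfer simp

instantiation qf :: (comm_ring_1) comm_ring_1
begin

lift_definition zero_qf :: "'a qf" is "(0, 1)" by simp
lemma Zero_qf_def: "0 = QF 0 1" by transfer simp
lift_definition one_qf :: "'a qf" is "(1, 1)" by simp
lemma One_qf_def: "1 = QF 1 1" by transfer simp

lift_definition plus_qf :: "'a qf \<Rightarrow> 'a qf \<Rightarrow> 'a qf"
  is "\<lambda>q r. (fst q * snd r + fst r * snd q, snd q * snd r)"
  by (clarsimp simp: nzd_mult, rule plus_resp_aux)

lemma add_qf [simp]:
  "nzd b \<Longrightarrow> nzd d \<Longrightarrow> QF a b + QF c d = QF (a * d + c * b) (b * d)"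
  by transfer (simp add: nzd_mult)

lift_definition uminus_qf :: "'a qf \<Rightarrow> 'a qf" is "\<lambda>x. (- fst x, snd x)"
  by simp

lemma minus_qf [simp]: "nzd b \<Longrightarrow> - QF a b = QF (- a) b"
  by transfer simp

definition diff_qf_def: "q - r = q + - (r::'a qf)"

lemma diff_qf [simp]:
  "nzd b \<Longrightarrow> nzd d \<Longrightarrow> QF a b - QF c d = QF (a * d - c * b) (b * d)"
  by (simp add: diff_qf_def)

lift_definition times_qf :: "'a qf \<Rightarrow> 'a qf \<Rightarrow> 'a qf"
  is "\<lambda>q r. (fst q * fst r, snd q * snd r)"
  by (clarsimp simp: nzd_mult, rule times_resp_aux)

lemma mult_qf [simp]: "nzd b \<Longrightarrow> nzd d \<Longrightarrow> QF a b * QF c d = QF (a * c) (b * d)"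
  by transfer (simp add: nzd_mult)

instance
proof
  fix q r s :: "'a qf"
  show "(q * r) * s = q * (r * s)"
    by (cases q, cases r, cases s) (simp add: eq_qf algebra_simps nzd_mult)
  show "q * r = r * q"
    by (cases q, cases r) (simp add: eq_qf algebra_simps nzd_mult)
  show "1 * q = q"
    by (cases q) (simp add: One_qf_def eq_qf)
  show "(q + r) + s = q + (r + s)"
    by (cases q, cases r, cases s) (simp add: eq_qf algebra_simps nzd_mult)
  show "q + r = r + q"
    by (cases q, cases r) (simp add: eq_qf algebra_simps nzd_mult)
  show "0 + q = q"
    by (cases q) (simp add: Zero_qf_def eq_qf)
  show "- q + q = 0"
    by (cases q) (simp add: Zero_qf_def eq_qf nzd_mult)
  show "q - r = q + - r"
    by (cases q, cases r) (simp add: diff_qf_def)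
  show "(q + r) * s = q * s + r * s"
    by (cases q, cases r, cases s) (simp add: eq_qf algebra_simps nzd_mult)
  show "(0::'a qf) \<noteq> 1"
    by (simp add: Zero_qf_def One_qf_def eq_qf)
qed

end

lemma of_nat_qf: "of_nat k = QF (of_nat k) 1"
  by (induct k) (simp_all add: Zero_qf_def One_qf_def)



lemma real_limit_le:
  fixes A B K :: real
  assumes "\<And>M::nat. M \<ge> 1 \<Longrightarrow> A \<le> B + K / real M"
  shows "A \<le> B"
proof (rule ccontr)
  assume "\<not> A \<le> B"
  hence d: "A - B > 0" by simp
  obtain M :: nat where M: "real M > K / (A - B)" "M \<ge> 1"
  proof -
    obtain N :: nat where "real N > K / (A - B)" using reals_Archimedean2 by blast
    thus ?thesis using that[of "N + 1"] by simp
  qed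
  have "K / real M < A - B"
    using M d by (simp add: divide_less_eq mult.commute pos_divide_less_eq)
  with assms[OF M(2)] show False by simp
qed

lemma prod_lower:
  fixes u v p q :: real
  assumes "u \<ge> 0" "v \<ge> 0" "u \<ge> p - 1" "v \<ge> q - 1" "p \<ge> 0" "q \<ge> 0"
  shows "u * v \<ge> p * q - p - q"
proof (cases "p \<ge> 1 \<and> q \<ge> 1")
  case True
  have "(p - 1) * (q - 1) \<le> u * v" using assms True by (intro mult_mono) auto
  thus ?thesis by (simp add: algebra_simps)
next
  case False
  have "p * q - p - q \<le> 0"
  proof (cases "p < 1")
    case True
    have "p * q \<le> 1 * q" using True assms by (intro mult_right_mono) auto
    thus ?thesis using assms by simp
  next
    case False
    hence "q < 1" using \<open>\<not> (1 \<le> p \<and> 1 \<le> q)\<close> by simp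
    have "p * q \<le> p * 1" using \<open>q < 1\<close> assms by (intro mult_left_mono) auto
    thus ?thesis using assms by simp
  qed
  moreover have "0 \<le> u * v" using assms by simp
  ultimately show ?thesis by linarith
qed

lemma div_sq:
  fixes A B K :: real and M :: nat
  assumes "M \<ge> 1" "real M * real M * A \<le> real M * real M * B + real M * K"
  shows "A \<le> B + K / real M"
proof -
  have m: "real M > 0" using assms by simp
  have "real M * (real M * A) \<le> real M * (real M * B + K)" using assms(2) by (simp add: algebra_simps)
  hence "real M * A \<le> real M * B + K" using m by simp
  hence "A \<le> (real M * B + K) / real M" using m by (simp add: le_divide_eq mult.commute)
  thus ?thesis using m by (simp add: add_divide_distrib)
qed

locale kd =
  fixes C :: "'a::comm_ring_1 set" and T :: "'a set"
  assumes C0: "0 \<in> C" and C1: "1 \<in> C" and Cadd: "\<And>x y. x \<in> C \<Longrightarrow> y \<in> C \<Longrightarrow> x + y \<in> C"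
    and Cuminus: "\<And>x. x \<in> C \<Longrightarrow> - x \<in> C" and Cmul: "\<And>x y. x \<in> C \<Longrightarrow> y \<in> C \<Longrightarrow> x * y \<in> C"
    and TC: "T \<subseteq> C" and Tadd: "\<And>x y. x \<in> T \<Longrightarrow> y \<in> T \<Longrightarrow> x + y \<in> T"
    and Tmul: "\<And>x y. x \<in> T \<Longrightarrow> y \<in> T \<Longrightarrow> x * y \<in> T"
    and Tsq: "\<And>x. x \<in> C \<Longrightarrow> x * x \<in> T"
    and arch: "\<And>x. x \<in> C \<Longrightarrow> \<exists>n::nat. of_nat n - x \<in> T \<and> of_nat n + x \<in> T"
    and inv: "\<And>k::nat. k \<ge> 1 \<Longrightarrow> \<exists>v\<in>C. of_nat k * v = 1"
begin

lemma Cdiff: "x \<in> C \<Longrightarrow> y \<in> C \<Longrightarrow> x - y \<in> C"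
  using Cadd Cuminus by (metis diff_conv_add_uminus)

lemma Cnat: "of_nat n \<in> C"
  by (induct n) (auto simp: C0 C1 Cadd)

lemma Cint: "of_int i \<in> C"
proof (cases "i \<ge> 0")
  case True
  then have "of_int i = (of_nat (nat i) :: 'a)" by simp
  then show ?thesis using Cnat by simp
next
  case False
  then have "of_int i = - (of_nat (nat (- i)) :: 'a)" by simp
  then show ?thesis using Cnat Cuminus by simp
qed

lemma T0: "0 \<in> T" using Tsq[OF C0] by simp
lemma T1: "1 \<in> T" using Tsq[OF C1] by simp
lemma Tnat: "of_nat n \<in> T"
  by (induct n) (auto simp: T0 T1 Tadd)
lemma Tint: "i \<ge> 0 \<Longrightarrow> of_int i \<in> T"
  using Tnat[of "nat i"] by simp

definition preord :: "'a set \<Rightarrow> bool" where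
  "preord P \<longleftrightarrow> T \<subseteq> P \<and> P \<subseteq> C \<and> (\<forall>x\<in>P. \<forall>y\<in>P. x + y \<in> P \<and> x * y \<in> P)"

lemma preord_T: "preord T"
  using TC Tadd Tmul by (auto simp: preord_def)

lemma cancel:
  assumes P: "preord P" and k: "k \<ge> 1" and x: "x \<in> C" and kx: "of_nat k * x \<in> P"
  shows "x \<in> P"
proof -
  obtain v where v: "v \<in> C" "of_nat k * v = 1" using inv[OF k] by blast
  have "v = of_nat k * (v * v)" using v(2) by (metis mult.assoc mult.left_commute mult_1_right)
  hence vT: "v \<in> T" using Tmul[OF Tnat[of k] Tsq[OF v(1)]] by simp
  have "x = v * (of_nat k * x)" using v(2) by (simp add: mult.assoc[symmetric] mult.commute)
  have "v * (of_nat k * x) \<in> P" using P vT kx unfolding preord_def by blast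
  thus ?thesis using \<open>x = v * (of_nat k * x)\<close> by simp
qed

lemma L2:
  assumes c: "c \<in> C" and s: "\<sigma> \<in> T" and t: "\<tau> \<in> T" and eq: "c * \<sigma> = 1 + \<tau>"
  shows "c \<in> T"
proof -
  obtain k0 :: nat where "of_nat k0 - \<sigma> \<in> T" using arch s TC by blast
  then have "(of_nat k0 - \<sigma>) + 1 \<in> T" using Tadd[OF _ T1] by blast
  then have kT: "of_nat (k0 + 1) - \<sigma> \<in> T" by (simp add: algebra_simps)
  define k where "k = k0 + 1"
  have k1: "k \<ge> 1" by (simp add: k_def)
  have ks: "of_nat k - \<sigma> \<in> T" using kT by (simp add: k_def)
  obtain m :: nat where m: "of_nat m + c \<in> T" using arch c by blast
  have step: "of_nat k * c + of_nat M \<in> T" if "of_nat k * c + of_nat (Suc M) \<in> T" for M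
  proof -
    have tau: "\<tau> = c * \<sigma> - 1" using eq by simp
    have "(of_nat k * c + of_nat (Suc M)) * (of_nat k - \<sigma>) + of_nat k * \<tau> + of_nat (Suc M) * \<sigma>
        = of_nat k * (of_nat k * c + of_nat M)"
      unfolding tau by (simp add: algebra_simps)
    moreover have "(of_nat k * c + of_nat (Suc M)) * (of_nat k - \<sigma>) + of_nat k * \<tau> + of_nat (Suc M) * \<sigma> \<in> T"
      by (rule Tadd[OF Tadd[OF Tmul[OF that ks] Tmul[OF Tnat t]] Tmul[OF Tnat s]])
    ultimately have "of_nat k * (of_nat k * c + of_nat M) \<in> T" by simp
    thus ?thesis using cancel[OF preord_T k1] c by (simp add: Cadd Cmul Cnat)
  qed
  have "of_nat k * c + of_nat (m * k - N) \<in> T" if "N \<le> m * k" for N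
    using that
  proof (induct N)
    case 0
    have "of_nat k * (of_nat m + c) \<in> T" using Tmul[OF Tnat m] .
    thus ?case by (simp add: algebra_simps)
  next
    case (Suc N)
    then have "of_nat k * c + of_nat (Suc (m * k - Suc N)) \<in> T"
      by (simp add: Suc_diff_Suc)
    thus ?case by (rule step)
  qed
  from this[of "m * k"] have "of_nat k * c \<in> T" by simp
  thus ?thesis using cancel[OF preord_T k1 c] by simp
qed

end

locale kd_ord = kd +
  fixes P
  assumes Ppre: "kd.preord C T P" and Pm1: "- 1 \<notin> P" and Ptot: "\<And>x. x \<in> C \<Longrightarrow> x \<in> P \<or> - x \<in> P"
begin

lemma TP: "T \<subseteq> P" and PC: "P \<subseteq> C"
  and Padd: "x \<in> P \<Longrightarrow> y \<in> P \<Longrightarrow> x + y \<in> P"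
  and Pmul: "x \<in> P \<Longrightarrow> y \<in> P \<Longrightarrow> x * y \<in> P"
  using Ppre by (auto simp: preord_def)

lemma Pnat: "of_nat n \<in> P" using TP Tnat by blast

lemma P_int: "of_int i \<in> P \<Longrightarrow> i \<ge> 0"
proof (rule ccontr)
  assume a: "of_int i \<in> P" "\<not> i \<ge> 0"
  have "of_int (- i - 1) \<in> T" using a(2) by (intro Tint) simp
  hence "of_int (- i - 1) \<in> P" using TP by blast
  hence "of_int i + of_int (- i - 1) \<in> P" using Padd a by blast
  thus False using Pm1 by simp
qed

lemma P_ord:
  assumes j: "j > 0" and j': "j' > 0" and x: "x \<in> C"
    and a: "of_nat j * x - of_int i \<in> P" and b: "of_int i' - of_nat j' * x \<in> P"
  shows "i * int j' \<le> i' * int j"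
proof -
  have "of_nat j' * (of_nat j * x - of_int i) + of_nat j * (of_int i' - of_nat j' * x) \<in> P"
    using a b Pnat Padd Pmul by blast
  moreover have "of_nat j' * (of_nat j * x - of_int i) + of_nat j * (of_int i' - of_nat j' * x)
     = (of_int (i' * int j - i * int j') :: 'a)" by (simp add: algebra_simps)
  ultimately have "of_int (i' * int j - i * int j') \<in> P" by simp
  thus ?thesis using P_int by fastforce
qed

definition Lset :: "'a \<Rightarrow> real set" where
  "Lset x = {real_of_int i / real j | i j. j > 0 \<and> of_nat j * x - of_int i \<in> P}"

definition psi :: "'a \<Rightarrow> real" where
  "psi x = Sup (Lset x)"

lemma L_ne: "x \<in> C \<Longrightarrow> Lset x \<noteq> {}"
proof -
  assume x: "x \<in> C"
  obtain n :: nat where "of_nat n + x \<in> T" using arch[OF x] by blast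
  hence "of_nat 1 * x - of_int (- int n) \<in> P" using TP by (auto simp: add.commute)
  hence "real_of_int (- int n) / real (1::nat) \<in> Lset x" unfolding Lset_def by blast
  thus ?thesis by blast
qed

lemma L_bdd: "x \<in> C \<Longrightarrow> bdd_above (Lset x)"
proof -
  assume x: "x \<in> C"
  obtain n :: nat where "of_nat n - x \<in> T" using arch[OF x] by blast
  hence n: "of_int (int n) - of_nat 1 * x \<in> P" using TP by auto
  show ?thesis unfolding bdd_above_def
  proof (intro exI ballI)
    fix y assume "y \<in> Lset x"
    then obtain i j where y: "y = real_of_int i / real j" "j > 0" "of_nat j * x - of_int i \<in> P"
      unfolding Lset_def by blast
    have "i * int 1 \<le> int n * int j" using P_ord[OF y(2) _ x y(3) n] by simp
    hence "real_of_int i \<le> real_of_int (int n * int j)" by (simp only: of_int_le_iff)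
    hence "real_of_int i \<le> real n * real j" by simp
    thus "y \<le> real n" using y(1,2) by (simp add: divide_le_eq)
  qed
qed

lemma F2:
  assumes j: "j > 0" and x: "x \<in> C" and a: "of_nat j * x - of_int i \<in> P"
  shows "real_of_int i \<le> real j * psi x"
proof -
  have "real_of_int i / real j \<in> Lset x" unfolding Lset_def using j a by blast
  hence "real_of_int i / real j \<le> psi x" unfolding psi_def using L_bdd[OF x] by (rule cSup_upper)
  thus ?thesis using j by (simp add: divide_le_eq mult.commute)
qed

lemma F3:
  assumes j: "j > 0" and x: "x \<in> C" and a: "of_int i - of_nat j * x \<in> P"
  shows "real j * psi x \<le> real_of_int i"
proof -
  have "psi x \<le> real_of_int i / real j" unfolding psi_def
  proof (rule cSup_least[OF L_ne[OF x]])
    fix y assume "y \<in> Lset x"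
    then obtain i0 j0 where y: "y = real_of_int i0 / real j0" "j0 > 0" "of_nat j0 * x - of_int i0 \<in> P"
      unfolding Lset_def by blast
    have "i0 * int j \<le> i * int j0" using P_ord[OF y(2) j x y(3) a] .
    hence "real_of_int (i0 * int j) \<le> real_of_int (i * int j0)" by (simp only: of_int_le_iff)
    hence "real_of_int i0 * real j \<le> real_of_int i * real j0" by simp
    thus "y \<le> real_of_int i / real j" using y(1,2) j by (simp add: divide_le_eq le_divide_eq mult.commute)
  qed
  thus ?thesis using j by (simp add: le_divide_eq mult.commute)
qed

lemma F5a:
  assumes j: "j > 0" and x: "x \<in> C" and lt: "real_of_int i < real j * psi x"
  shows "of_nat j * x - of_int i \<in> P"
proof (rule ccontr)
  assume "of_nat j * x - of_int i \<notin> P"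
  moreover have "of_nat j * x - of_int i \<in> C" by (rule Cdiff[OF Cmul[OF Cnat x] Cint])
  ultimately have "- (of_nat j * x - of_int i) \<in> P" using Ptot by blast
  hence "of_int i - of_nat j * x \<in> P" by simp
  from F3[OF j x this] lt show False by simp
qed

lemma F5b:
  assumes j: "j > 0" and x: "x \<in> C" and lt: "real j * psi x < real_of_int i"
  shows "of_int i - of_nat j * x \<in> P"
proof (rule ccontr)
  assume "of_int i - of_nat j * x \<notin> P"
  moreover have "of_int i - of_nat j * x \<in> C" by (rule Cdiff[OF Cint Cmul[OF Cnat x]])
  ultimately have "- (of_int i - of_nat j * x) \<in> P" using Ptot by blast
  hence "of_nat j * x - of_int i \<in> P" by simp
  from F2[OF j x this] lt show False by simp
qed

lemma psi_eqI:
  assumes x: "x \<in> C"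
    and lo: "\<And>i j. j > 0 \<Longrightarrow> of_nat j * x - of_int i \<in> P \<Longrightarrow> real_of_int i \<le> real j * z"
    and up: "\<And>i j. j > 0 \<Longrightarrow> of_int i - of_nat j * x \<in> P \<Longrightarrow> real j * z \<le> real_of_int i"
  shows "psi x = z"
proof (rule ccontr)
  assume ne: "psi x \<noteq> z"
  define d where "d = \<bar>z - psi x\<bar>"
  have d: "d > 0" using ne by (simp add: d_def)
  obtain j :: nat where j: "real j * d > 1" "j > 0"
  proof -
    obtain N :: nat where "real N > 1 / d" using reals_Archimedean2 by blast
    hence "real N * d > 1" using d by (simp add: divide_less_eq)
    moreover hence "N > 0" by (cases N) auto
    ultimately show ?thesis using that by blast
  qed
  show False
  proof (cases "psi x < z")
    case True
    define i where "i = \<lfloor>real j * psi x\<rfloor> + 1"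
    have i1: "real j * psi x < real_of_int i" unfolding i_def by linarith
    have "real_of_int i \<le> real j * psi x + 1" unfolding i_def by linarith
    also have "\<dots> < real j * z" using j True by (simp add: d_def algebra_simps)
    finally have i2: "real_of_int i < real j * z" .
    from up[OF j(2) F5b[OF j(2) x i1]] i2 show False by simp
  next
    case False
    hence zl: "z < psi x" using ne by simp
    define i where "i = \<lfloor>real j * z\<rfloor> + 1"
    have i1: "real j * z < real_of_int i" unfolding i_def by linarith
    have "real_of_int i \<le> real j * z + 1" unfolding i_def by linarith
    also have "\<dots> < real j * psi x" using j zl by (simp add: d_def algebra_simps)
    finally have i2: "real_of_int i < real j * psi x" .
    from lo[OF j(2) F5a[OF j(2) x i2]] i1 show False by simp
  qed
qed

lemma psi_int: "psi (of_int k) = real_of_int k"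
proof (rule psi_eqI[OF Cint])
  fix j :: nat
  show "real_of_int i \<le> real j * real_of_int k" if "j > 0" "of_nat j * of_int k - of_int i \<in> P" for i
  proof -
    have "of_int (int j * k - i) \<in> P" using that(2) by simp
    hence "i \<le> int j * k" using P_int by fastforce
    hence "real_of_int i \<le> real_of_int (int j * k)" by (simp only: of_int_le_iff)
    thus ?thesis by simp
  qed
  show "real j * real_of_int k \<le> real_of_int i" if "j > 0" "of_int i - of_nat j * of_int k \<in> P" for i
  proof -
    have "of_int (i - int j * k) \<in> P" using that(2) by simp
    hence "int j * k \<le> i" using P_int by fastforce
    hence "real_of_int (int j * k) \<le> real_of_int i" by (simp only: of_int_le_iff)
    thus ?thesis by simp
  qed
qed

lemma psi_nat: "psi (of_nat n) = real n"
  using psi_int[of "int n"] by simp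

lemma psi_one: "psi 1 = 1"
  using psi_int[of 1] by simp

lemma psi_neg: "x \<in> C \<Longrightarrow> psi (- x) = - psi x"
proof (rule psi_eqI[OF Cuminus])
  assume x: "x \<in> C"
  fix i :: int and j :: nat
  show "real_of_int i \<le> real j * - psi x" if "j > 0" "of_nat j * - x - of_int i \<in> P"
  proof -
    have "of_int (- i) - of_nat j * x = of_nat j * - x - of_int i" by (simp add: algebra_simps)
    hence "of_int (- i) - of_nat j * x \<in> P" using that(2) by metis
    from F3[OF that(1) x this] show ?thesis by simp
  qed
  show "real j * - psi x \<le> real_of_int i" if "j > 0" "of_int i - of_nat j * - x \<in> P"
  proof -
    have "of_nat j * x - of_int (- i) = of_int i - of_nat j * - x" by (simp add: algebra_simps)
    hence "of_nat j * x - of_int (- i) \<in> P" using that(2) by metis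
    from F2[OF that(1) x this] show ?thesis by simp
  qed
qed

lemma psi_add_le:
  assumes x: "x \<in> C" and y: "y \<in> C"
  shows "psi (x + y) \<le> psi x + psi y"
proof (rule ccontr)
  assume "\<not> ?thesis"
  hence d: "psi (x + y) - psi x - psi y > 0" by simp
  obtain M :: nat where M: "real M * (psi (x + y) - psi x - psi y) > 2" "M > 0"
  proof -
    obtain N :: nat where "real N > 2 / (psi (x + y) - psi x - psi y)" using reals_Archimedean2 by blast
    hence "real N * (psi (x + y) - psi x - psi y) > 2" using d by (simp add: divide_less_eq)
    moreover hence "N > 0" by (cases N) auto
    ultimately show ?thesis using that by blast
  qed
  define i1 where "i1 = \<lfloor>real M * psi x\<rfloor> + 1"
  define i2 where "i2 = \<lfloor>real M * psi y\<rfloor> + 1"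
  have a1: "of_int i1 - of_nat M * x \<in> P" by (rule F5b[OF M(2) x]) (unfold i1_def, linarith)
  have a2: "of_int i2 - of_nat M * y \<in> P" by (rule F5b[OF M(2) y]) (unfold i2_def, linarith)
  have "(of_int i1 - of_nat M * x) + (of_int i2 - of_nat M * y) \<in> P" using Padd a1 a2 by blast
  hence "of_int (i1 + i2) - of_nat M * (x + y) \<in> P" by (simp add: algebra_simps)
  from F3[OF M(2) Cadd[OF x y] this]
  have "real M * psi (x + y) \<le> real_of_int (i1 + i2)" .
  moreover have "real_of_int (i1 + i2) \<le> real M * psi x + real M * psi y + 2"
    unfolding i1_def i2_def by simp linarith
  ultimately show False using M(1) by (simp add: algebra_simps)
qed

lemma psi_add:
  assumes x: "x \<in> C" and y: "y \<in> C"
  shows "psi (x + y) = psi x + psi y"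
proof -
  have "psi x = psi ((x + y) + - y)" by simp
  also have "\<dots> \<le> psi (x + y) + psi (- y)" using psi_add_le Cadd Cuminus x y by blast
  finally show ?thesis using psi_add_le[OF x y] psi_neg[OF y] by simp
qed

lemma psi_nat_mult: "x \<in> C \<Longrightarrow> psi (of_nat n * x) = real n * psi x"
proof (induct n)
  case 0
  then show ?case using psi_int[of 0] by simp
next
  case (Suc n)
  have "psi (of_nat (Suc n) * x) = psi (x + of_nat n * x)" by (simp add: algebra_simps)
  also have "\<dots> = psi x + psi (of_nat n * x)" using psi_add Suc Cmul Cnat by blast
  finally show ?case using Suc by (simp add: algebra_simps)
qed

lemma psi_P: "x \<in> P \<Longrightarrow> psi x \<ge> 0"
  using F2[of 1 x 0] PC by auto

lemma psi_pos_P: "x \<in> C \<Longrightarrow> psi x > 0 \<Longrightarrow> x \<in> P"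
  using F5a[of 1 x 0] by auto

lemma psi_mult_pos:
  assumes x: "x \<in> C" and y: "y \<in> C" and a: "psi x > 0" and b: "psi y > 0"
  shows "psi (x * y) = psi x * psi y"
proof (rule antisym)
  have xy: "x * y \<in> C" using Cmul x y by blast
  show "psi (x * y) \<le> psi x * psi y"
  proof (rule real_limit_le[where K="psi x + psi y + 1"])
    fix M :: nat assume M1: "M \<ge> 1"
    hence M: "M > 0" by simp
    define i1 where "i1 = \<lfloor>real M * psi x\<rfloor> + 1"
    define i2 where "i2 = \<lfloor>real M * psi y\<rfloor> + 1"
    have Ma: "real M * psi x > 0" and Mb: "real M * psi y > 0" using M a b by simp_all
    have a1: "of_int i1 - of_nat M * x \<in> P" by (rule F5b[OF M x]) (unfold i1_def, linarith)
    have a2: "of_int i2 - of_nat M * y \<in> P" by (rule F5b[OF M y]) (unfold i2_def, linarith)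
    have "i2 \<ge> 0" unfolding i2_def using Mb by linarith
    hence i2P: "of_int i2 \<in> P" using TP Tint by auto
    have MxP: "of_nat M * x \<in> P" using Pmul[OF Pnat psi_pos_P[OF x a]] .
    have "(of_int i1 - of_nat M * x) * of_int i2 + (of_nat M * x) * (of_int i2 - of_nat M * y) \<in> P"
      by (rule Padd[OF Pmul[OF a1 i2P] Pmul[OF MxP a2]])
    moreover have "(of_int i1 - of_nat M * x) * of_int i2 + (of_nat M * x) * (of_int i2 - of_nat M * y)
       = of_int (i1 * i2) - of_nat (M * M) * (x * y)" by (simp add: algebra_simps)
    ultimately have "of_int (i1 * i2) - of_nat (M * M) * (x * y) \<in> P" by simp
    from F3[OF _ xy this] M have "real (M * M) * psi (x * y) \<le> real_of_int (i1 * i2)" by simp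
    also have "\<dots> \<le> (real M * psi x + 1) * (real M * psi y + 1)"
      unfolding of_int_mult by (rule mult_mono) (use Ma Mb in \<open>unfold i1_def i2_def, linarith+\<close>)
    also have "\<dots> \<le> real M * real M * (psi x * psi y) + real M * (psi x + psi y + 1)"
      using M1 by (simp add: algebra_simps)
    finally show "psi (x * y) \<le> psi x * psi y + (psi x + psi y + 1) / real M"
      using M1 by (intro div_sq) (simp_all add: algebra_simps)
  qed
  show "psi x * psi y \<le> psi (x * y)"
  proof (rule real_limit_le[where K="psi x + psi y"])
    fix M :: nat assume M1: "M \<ge> 1"
    hence M: "M > 0" by simp
    define i1 where "i1 = \<lceil>real M * psi x\<rceil> - 1"
    define i2 where "i2 = \<lceil>real M * psi y\<rceil> - 1"
    have Ma: "real M * psi x > 0" and Mb: "real M * psi y > 0" using M a b by simp_all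
    have i1p: "i1 \<ge> 0" and i2p: "i2 \<ge> 0" using Ma Mb unfolding i1_def i2_def by linarith+
    have a1: "of_nat M * x - of_int i1 \<in> P" by (rule F5a[OF M x]) (unfold i1_def, linarith)
    have a2: "of_nat M * y - of_int i2 \<in> P" by (rule F5a[OF M y]) (unfold i2_def, linarith)
    have i1P: "of_int i1 \<in> P" and i2P: "of_int i2 \<in> P" using TP Tint i1p i2p by auto
    have "(of_nat M * x - of_int i1) * (of_nat M * y - of_int i2) + of_int i2 * (of_nat M * x - of_int i1)
        + of_int i1 * (of_nat M * y - of_int i2) \<in> P"
      by (rule Padd[OF Padd[OF Pmul[OF a1 a2] Pmul[OF i2P a1]] Pmul[OF i1P a2]])
    moreover have "(of_nat M * x - of_int i1) * (of_nat M * y - of_int i2) + of_int i2 * (of_nat M * x - of_int i1)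
        + of_int i1 * (of_nat M * y - of_int i2) = of_nat (M * M) * (x * y) - of_int (i1 * i2)"
      by (simp add: algebra_simps)
    ultimately have "of_nat (M * M) * (x * y) - of_int (i1 * i2) \<in> P" by simp
    from F2[OF _ xy this] M have le1: "real_of_int (i1 * i2) \<le> real (M * M) * psi (x * y)" by simp
    have "real M * psi x * (real M * psi y) - real M * psi x - real M * psi y \<le> real_of_int i1 * real_of_int i2"
      by (rule prod_lower) (use i1p i2p Ma Mb in \<open>unfold i1_def i2_def, linarith+\<close>)
    hence "real M * real M * (psi x * psi y) \<le> real M * real M * psi (x * y) + real M * (psi x + psi y)"
      using le1 by (simp add: algebra_simps)
    thus "psi x * psi y \<le> psi (x * y) + (psi x + psi y) / real M"
      using M1 by (intro div_sq) simp_all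
  qed
qed

lemma psi_mult:
  assumes x: "x \<in> C" and y: "y \<in> C"
  shows "psi (x * y) = psi x * psi y"
proof -
  define n where "n = nat \<lceil>\<bar>psi x\<bar> + \<bar>psi y\<bar>\<rceil> + 1"
  have n1: "real n > \<bar>psi x\<bar> + \<bar>psi y\<bar>" unfolding n_def by linarith
  have xn: "x + of_nat n \<in> C" and yn: "y + of_nat n \<in> C" using x y Cadd Cnat by auto
  have px: "psi (x + of_nat n) = psi x + real n" using psi_add[OF x Cnat] psi_nat by simp
  have py: "psi (y + of_nat n) = psi y + real n" using psi_add[OF y Cnat] psi_nat by simp
  have "psi ((x + of_nat n) * (y + of_nat n)) = (psi x + real n) * (psi y + real n)"
    using psi_mult_pos[OF xn yn] px py n1 by simp
  moreover have "(x + of_nat n) * (y + of_nat n) = x * y + (of_nat n * x + (of_nat n * y + of_nat n * of_nat n))"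
    by (simp add: algebra_simps)
  moreover have "psi (x * y + (of_nat n * x + (of_nat n * y + of_nat n * of_nat n)))
      = psi (x * y) + real n * psi x + real n * psi y + real n * real n"
    using psi_add psi_nat_mult psi_nat Cmul Cadd Cnat x y by (simp add: of_nat_mult[symmetric] del: of_nat_mult)
  ultimately show ?thesis by (simp add: algebra_simps)
qed

end
context kd
begin

lemma ext_preord:
  assumes P: "preord P" and x: "x \<in> C"
  shows "preord {p1 + x * p2 | p1 p2. p1 \<in> P \<and> p2 \<in> P}" (is "preord ?Q")
proof -
  have PC: "P \<subseteq> C" and TP: "T \<subseteq> P" and Pa: "\<And>a b. a \<in> P \<Longrightarrow> b \<in> P \<Longrightarrow> a + b \<in> P"
    and Pm: "\<And>a b. a \<in> P \<Longrightarrow> b \<in> P \<Longrightarrow> a * b \<in> P"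
    using P by (auto simp: preord_def)
  have P0: "0 \<in> P" using T0 TP by blast
  have xx: "x * x \<in> P" using Tsq[OF x] TP by blast
  have "T \<subseteq> ?Q"
  proof
    fix t assume "t \<in> T"
    hence "t \<in> P" using TP by blast
    moreover have "t = t + x * 0" by simp
    ultimately show "t \<in> ?Q" using P0 by blast
  qed
  moreover have "?Q \<subseteq> C"
  proof
    fix q assume "q \<in> ?Q"
    then obtain p1 p2 where "q = p1 + x * p2" "p1 \<in> P" "p2 \<in> P" by blast
    thus "q \<in> C" using PC x Cadd Cmul by blast
  qed
  moreover have "\<forall>a\<in>?Q. \<forall>b\<in>?Q. a + b \<in> ?Q \<and> a * b \<in> ?Q"
  proof (intro ballI conjI)
    fix a b assume "a \<in> ?Q" "b \<in> ?Q"
    then obtain p1 p2 p3 p4 where a: "a = p1 + x * p2" "p1 \<in> P" "p2 \<in> P"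
      and b: "b = p3 + x * p4" "p3 \<in> P" "p4 \<in> P" by blast
    have "a + b = (p1 + p3) + x * (p2 + p4)" using a b by (simp add: algebra_simps)
    moreover have "p1 + p3 \<in> P" "p2 + p4 \<in> P" using a b Pa by auto
    ultimately show "a + b \<in> ?Q" by blast
    have "a * b = (p1 * p3 + (x * x) * (p2 * p4)) + x * (p1 * p4 + p2 * p3)" using a b by (simp add: algebra_simps)
    moreover have "p1 * p3 + (x * x) * (p2 * p4) \<in> P" using a b Pa Pm xx by auto
    moreover have "p1 * p4 + p2 * p3 \<in> P" using a b Pa Pm by auto
    ultimately show "a * b \<in> ?Q" by blast
  qed
  ultimately show ?thesis by (simp add: preord_def)
qed

theorem KD:
  assumes c: "c \<in> C" and cT: "c \<notin> T"
  shows "\<exists>\<psi>::'a \<Rightarrow> real. (\<forall>x\<in>C. \<forall>y\<in>C. \<psi> (x + y) = \<psi> x + \<psi> y \<and> \<psi> (x * y) = \<psi> x * \<psi> y)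
            \<and> \<psi> 1 = 1 \<and> (\<forall>t\<in>T. \<psi> t \<ge> 0) \<and> \<psi> c \<le> 0"
proof -
  define S where "S = {t1 - c * t2 | t1 t2. t1 \<in> T \<and> t2 \<in> T}"
  have preS: "preord S"
  proof -
    have "T \<subseteq> S"
    proof
      fix t assume "t \<in> T"
      moreover have "t = t - c * 0" by simp
      ultimately show "t \<in> S" unfolding S_def using T0 by blast
    qed
    moreover have "S \<subseteq> C"
    proof
      fix q assume "q \<in> S"
      then obtain t1 t2 where "q = t1 - c * t2" "t1 \<in> T" "t2 \<in> T" unfolding S_def by blast
      thus "q \<in> C" using TC c Cdiff Cmul by blast
    qed
    moreover have "\<forall>a\<in>S. \<forall>b\<in>S. a + b \<in> S \<and> a * b \<in> S"
    proof (intro ballI conjI)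
      fix a b assume "a \<in> S" "b \<in> S"
      then obtain p1 p2 p3 p4 where a: "a = p1 - c * p2" "p1 \<in> T" "p2 \<in> T"
        and b: "b = p3 - c * p4" "p3 \<in> T" "p4 \<in> T" unfolding S_def by blast
      have "a + b = (p1 + p3) - c * (p2 + p4)" unfolding a(1) b(1) by (simp add: algebra_simps)
      moreover have "p1 + p3 \<in> T" "p2 + p4 \<in> T" using a b Tadd by auto
      ultimately show "a + b \<in> S" unfolding S_def by blast
      have "a * b = (p1 * p3 + (c * c) * (p2 * p4)) - c * (p1 * p4 + p2 * p3)" unfolding a(1) b(1) by (simp add: algebra_simps)
      moreover have "p1 * p3 + (c * c) * (p2 * p4) \<in> T" using a b Tadd Tmul Tsq[OF c] by auto
      moreover have "p1 * p4 + p2 * p3 \<in> T" using a b Tadd Tmul by auto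
      ultimately show "a * b \<in> S" unfolding S_def by blast
    qed
    ultimately show ?thesis by (simp add: preord_def)
  qed
  have m1S: "- 1 \<notin> S"
  proof
    assume "- 1 \<in> S"
    then obtain t1 t2 where "- 1 = t1 - c * t2" "t1 \<in> T" "t2 \<in> T" unfolding S_def by blast
    moreover hence "c * t2 = 1 + t1" by (simp add: algebra_simps)
    ultimately have "c \<in> T" using L2[OF c] by blast
    thus False using cT by blast
  qed
  define A where "A = {P. preord P \<and> S \<subseteq> P \<and> - 1 \<notin> P}"
  have "\<exists>M\<in>A. \<forall>X\<in>A. M \<subseteq> X \<longrightarrow> X = M"
  proof (rule subset_Zorn_nonempty)
    show "A \<noteq> {}" using preS m1S unfolding A_def by blast
  next
    fix Ch assume ne: "Ch \<noteq> {}" and ch: "subset.chain A Ch"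
    have chA: "Ch \<subseteq> A" and lin: "\<forall>X\<in>Ch. \<forall>Y\<in>Ch. X \<subseteq> Y \<or> Y \<subseteq> X"
      using ch by (auto simp: subset_chain_def)
    obtain X0 where X0: "X0 \<in> Ch" using ne by blast
    have "T \<subseteq> \<Union>Ch" using X0 chA unfolding A_def preord_def by blast
    moreover have "\<Union>Ch \<subseteq> C" using chA unfolding A_def preord_def by blast
    moreover have "\<forall>a\<in>\<Union>Ch. \<forall>b\<in>\<Union>Ch. a + b \<in> \<Union>Ch \<and> a * b \<in> \<Union>Ch"
    proof (intro ballI)
      fix a b assume "a \<in> \<Union>Ch" "b \<in> \<Union>Ch"
      then obtain X Y where XY: "a \<in> X" "X \<in> Ch" "b \<in> Y" "Y \<in> Ch" by blast
      then obtain Z where Z: "Z \<in> Ch" "a \<in> Z" "b \<in> Z" using lin by blast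
      hence "preord Z" using chA unfolding A_def by blast
      hence "a + b \<in> Z \<and> a * b \<in> Z" using Z unfolding preord_def by blast
      thus "a + b \<in> \<Union>Ch \<and> a * b \<in> \<Union>Ch" using Z by blast
    qed
    ultimately have "preord (\<Union>Ch)" by (simp add: preord_def)
    moreover have "S \<subseteq> \<Union>Ch" using X0 chA unfolding A_def by blast
    moreover have "- 1 \<notin> \<Union>Ch" using chA unfolding A_def by blast
    ultimately show "\<Union>Ch \<in> A" unfolding A_def by blast
  qed
  then obtain P where PA: "P \<in> A" and maxP: "\<And>X. X \<in> A \<Longrightarrow> P \<subseteq> X \<Longrightarrow> X = P" by blast
  have preP: "preord P" and SP: "S \<subseteq> P" and m1P: "- 1 \<notin> P" using PA unfolding A_def by auto
  have Pa: "\<And>a b. a \<in> P \<Longrightarrow> b \<in> P \<Longrightarrow> a + b \<in> P"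
    and Pm: "\<And>a b. a \<in> P \<Longrightarrow> b \<in> P \<Longrightarrow> a * b \<in> P" and TP: "T \<subseteq> P"
    using preP by (auto simp: preord_def)
  have P1: "1 \<in> P" using T1 TP by blast
  have P0: "0 \<in> P" using T0 TP by blast
  have ext: "\<exists>p1 p2. p1 \<in> P \<and> p2 \<in> P \<and> - 1 = p1 + z * p2" if z: "z \<in> C" "z \<notin> P" for z
  proof (rule ccontr)
    assume "\<not> ?thesis"
    hence "- 1 \<notin> {p1 + z * p2 | p1 p2. p1 \<in> P \<and> p2 \<in> P}" by blast
    moreover have "P \<subseteq> {p1 + z * p2 | p1 p2. p1 \<in> P \<and> p2 \<in> P}"
    proof
      fix p assume "p \<in> P"
      moreover have "p = p + z * 0" by simp
      ultimately show "p \<in> {p1 + z * p2 | p1 p2. p1 \<in> P \<and> p2 \<in> P}" using P0 by blast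
    qed
    ultimately have "{p1 + z * p2 | p1 p2. p1 \<in> P \<and> p2 \<in> P} \<in> A"
      using ext_preord[OF preP z(1)] SP unfolding A_def by blast
    from maxP[OF this] have eq: "{p1 + z * p2 | p1 p2. p1 \<in> P \<and> p2 \<in> P} = P"
      using \<open>P \<subseteq> _\<close> by blast
    have "z = 0 + z * 1" by simp
    hence "z \<in> {p1 + z * p2 | p1 p2. p1 \<in> P \<and> p2 \<in> P}" using P0 P1 by blast
    thus False using eq z(2) by blast
  qed
  have tot: "x \<in> P \<or> - x \<in> P" if x: "x \<in> C" for x
  proof (rule ccontr)
    assume "\<not> ?thesis"
    hence n1: "x \<notin> P" and n2: "- x \<notin> P" by auto
    obtain p1 p2 where e1: "p1 \<in> P" "p2 \<in> P" "- 1 = p1 + x * p2" using ext[OF x n1] by blast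
    obtain p3 p4 where e2: "p3 \<in> P" "p4 \<in> P" "- 1 = p3 + (- x) * p4" using ext[OF Cuminus[OF x] n2] by blast
    have xp2: "x * p2 = - 1 - p1" using e1(3) by (simp add: algebra_simps)
    have xp4: "x * p4 = 1 + p3" using e2(3) by (simp add: algebra_simps)
    have "p1 + p3 + p1 * p3 + (x * x) * (p2 * p4) = p1 + p3 + p1 * p3 + (x * p2) * (x * p4)"
      by (simp add: algebra_simps)
    also have "\<dots> = - 1" unfolding xp2 xp4 by (simp add: algebra_simps)
    finally have eq: "p1 + p3 + p1 * p3 + (x * x) * (p2 * p4) = - 1" .
    have xxP: "x * x \<in> P" using Tsq[OF x] TP by blast
    have "p1 + p3 + p1 * p3 + (x * x) * (p2 * p4) \<in> P"
      by (rule Pa[OF Pa[OF Pa[OF e1(1) e2(1)] Pm[OF e1(1) e2(1)]] Pm[OF xxP Pm[OF e1(2) e2(2)]]])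
    thus False using eq m1P by simp
  qed
  interpret O: kd_ord C T P
    apply (rule kd_ord.intro[OF kd_axioms])
    apply (rule kd_ord_axioms.intro)
      apply (rule preP)
     apply (rule m1P)
    apply (rule tot)
    apply assumption
    done
  have "- c = 0 - c * 1" by simp
  hence "- c \<in> S" unfolding S_def using T0 T1 by blast
  hence "O.psi (- c) \<ge> 0" using SP O.psi_P by blast
  hence "O.psi c \<le> 0" using O.psi_neg[OF c] by simp
  moreover have "\<forall>t\<in>T. O.psi t \<ge> 0" using TP O.psi_P by blast
  ultimately have "(\<forall>x\<in>C. \<forall>y\<in>C. O.psi (x + y) = O.psi x + O.psi y \<and> O.psi (x * y) = O.psi x * O.psi y)
            \<and> O.psi 1 = 1 \<and> (\<forall>t\<in>T. O.psi t \<ge> 0) \<and> O.psi c \<le> 0"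
    by (simp add: O.psi_add O.psi_mult O.psi_one)
  thus ?thesis by blast
qed

end



context kd
begin

definition ishom :: "('a \<Rightarrow> real) \<Rightarrow> bool" where
  "ishom \<psi> \<longleftrightarrow> (\<forall>x\<in>C. \<forall>y\<in>C. \<psi> (x + y) = \<psi> x + \<psi> y \<and> \<psi> (x * y) = \<psi> x * \<psi> y)
       \<and> \<psi> 1 = 1 \<and> (\<forall>t\<in>T. \<psi> t \<ge> 0)"

lemma hom_add: "ishom \<psi> \<Longrightarrow> x \<in> C \<Longrightarrow> y \<in> C \<Longrightarrow> \<psi> (x + y) = \<psi> x + \<psi> y"
  and hom_mul: "ishom \<psi> \<Longrightarrow> x \<in> C \<Longrightarrow> y \<in> C \<Longrightarrow> \<psi> (x * y) = \<psi> x * \<psi> y"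
  and hom_one: "ishom \<psi> \<Longrightarrow> \<psi> 1 = 1"
  and hom_pos: "ishom \<psi> \<Longrightarrow> t \<in> T \<Longrightarrow> \<psi> t \<ge> 0"
  unfolding ishom_def by auto

lemma hom_zero: "ishom \<psi> \<Longrightarrow> \<psi> 0 = 0"
  using hom_add[of \<psi> 0 0] C0 by simp

lemma hom_neg: "ishom \<psi> \<Longrightarrow> x \<in> C \<Longrightarrow> \<psi> (- x) = - \<psi> x"
  using hom_add[of \<psi> x "- x"] hom_zero[of \<psi>] Cuminus by simp

lemma hom_nat_mult: "ishom \<psi> \<Longrightarrow> x \<in> C \<Longrightarrow> \<psi> (of_nat n * x) = real n * \<psi> x"
proof (induct n)
  case 0 then show ?case using hom_zero by simp
next
  case (Suc n)
  have "\<psi> (of_nat (Suc n) * x) = \<psi> (x + of_nat n * x)" by (simp add: algebra_simps)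
  also have "\<dots> = \<psi> x + \<psi> (of_nat n * x)" using hom_add Suc Cmul Cnat by blast
  finally show ?case using Suc by (simp add: algebra_simps)
qed

lemma ishom_exists:
  assumes "c \<in> C" "c \<notin> T" shows "\<exists>\<psi>. ishom \<psi> \<and> \<psi> c \<le> 0"
  using KD[OF assms] unfolding ishom_def by blast

end

locale gctx =
  fixes le :: "'a::comm_ring_1 \<Rightarrow> 'a \<Rightarrow> bool"
  assumes po: "po_comm_ring le" and lz: "localizable le"
    and natL: "\<forall>n::nat. n \<ge> 1 \<longrightarrow> (of_nat n :: 'a) \<in> Loc le"
begin

abbreviation pos :: "'a \<Rightarrow> bool" where "pos r \<equiv> le 0 r"

lemma le_refl: "le r r" and le_antisym: "le r s \<Longrightarrow> le s r \<Longrightarrow> r = s"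
  and le_trans: "le r s \<Longrightarrow> le s t \<Longrightarrow> le r t" and le_add: "le r s \<Longrightarrow> le (r + t) (s + t)"
  and pos_mul: "pos r \<Longrightarrow> pos s \<Longrightarrow> pos (r * s)" and pos_sq: "pos (r * r)"
  using po unfolding po_comm_ring_def by blast+

lemma le_sub: "le a b \<longleftrightarrow> pos (b - a)"
proof
  assume "le a b" from le_add[OF this, of "- a"] show "pos (b - a)" by simp
next
  assume "pos (b - a)" from le_add[OF this, of a] show "le a b" by simp
qed

lemma pos_add: "pos a \<Longrightarrow> pos b \<Longrightarrow> pos (a + b)"
  using le_add[of 0 a b] le_trans by (simp add: add.commute)

lemma pos_1: "pos 1" using pos_sq[of 1] by simp

lemma pos_nat: "pos (of_nat n)"
  by (induct n) (auto simp: le_refl pos_1 pos_add)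

lemma pos_antisym: "pos a \<Longrightarrow> pos (- a) \<Longrightarrow> a = 0"
  using le_sub[of a 0] le_antisym by simp

lemma Loc_pos: "s \<in> Loc le \<Longrightarrow> pos s"
  unfolding Loc_def using pos_add[OF _ pos_1, of "s - 1"] by simp

lemma Loc_refl: "s \<in> Loc le \<Longrightarrow> pos (r * s) \<Longrightarrow> pos r"
  unfolding Loc_def by blast

lemma Loc_mult: assumes "s \<in> Loc le" "t \<in> Loc le" shows "s * t \<in> Loc le"
proof -
  have a: "pos (s - 1)" "pos (t - 1)" using assms unfolding Loc_def by auto
  have eq: "s * t - 1 = (s - 1) * (t - 1) + (s - 1) + (t - 1)" by (simp add: algebra_simps)
  have "pos ((s - 1) * (t - 1) + (s - 1) + (t - 1))" by (rule pos_add[OF pos_add[OF pos_mul[OF a] a(1)] a(2)])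
  hence "pos (s * t - 1)" unfolding eq .
  moreover have "pos r" if "pos (r * (s * t))" for r
  proof -
    have "pos ((r * s) * t)" using that by (simp add: mult.assoc)
    hence "pos (r * s)" using Loc_refl[OF assms(2)] by blast
    thus ?thesis using Loc_refl[OF assms(1)] by blast
  qed
  ultimately show ?thesis unfolding Loc_def by blast
qed

lemma Loc_nzd: assumes "s \<in> Loc le" shows "nzd s"
  unfolding nzd_def
proof (intro allI impI)
  fix x assume "x * s = 0"
  hence "pos (x * s)" "pos ((- x) * s)" using le_refl[of 0] by simp_all
  hence "pos x" "pos (- x)" using Loc_refl[OF assms] by blast+
  thus "x = 0" using pos_antisym by blast
qed

lemma nat_Loc: "n \<ge> 1 \<Longrightarrow> (of_nat n :: 'a) \<in> Loc le"
  using natL by blast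

lemma one_Loc: "1 \<in> Loc le" using nat_Loc[of 1] by simp

lemma two_cancel: assumes "pos (x + x)" shows "pos x"
proof -
  have "x * of_nat 2 = x + x" by (simp add: mult_2_right)
  hence "pos (x * of_nat 2)" using assms by metis
  thus ?thesis using Loc_refl[OF nat_Loc[of 2]] by simp
qed

definition bnd :: "'a \<Rightarrow> 'a \<Rightarrow> nat \<Rightarrow> bool" where
  "bnd r s n \<longleftrightarrow> pos (of_nat n * s - r) \<and> pos (of_nat n * s + r)"

lemma bd_iff: "(r, s) \<in> bd_fracs le \<longleftrightarrow> s \<in> Loc le \<and> (\<exists>n. bnd r s n)"
proof -
  have "frac_le le (- of_nat n, 1) (r, s) \<longleftrightarrow> pos (of_nat n * s + r)" for n
    unfolding frac_le_def using le_sub[of "- of_nat n * s" r] by (simp add: algebra_simps)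
  moreover have "frac_le le (r, s) (of_nat n, 1) \<longleftrightarrow> pos (of_nat n * s - r)" for n
    unfolding frac_le_def using le_sub[of r "of_nat n * s"] by simp
  ultimately show ?thesis unfolding bd_fracs_def bnd_def by auto
qed

lemma bd_add:
  assumes "(r, s) \<in> bd_fracs le" "(r', s') \<in> bd_fracs le"
  shows "(r * s' + r' * s, s * s') \<in> bd_fracs le"
proof -
  obtain n n' where s: "s \<in> Loc le" "bnd r s n" and s': "s' \<in> Loc le" "bnd r' s' n'"
    using assms bd_iff by blast
  have ps: "pos s" "pos s'" using s s' Loc_pos by auto
  have a: "pos (of_nat n * s - r)" "pos (of_nat n * s + r)" "pos (of_nat n' * s' - r')" "pos (of_nat n' * s' + r')"
    using s s' unfolding bnd_def by auto
  have e1: "of_nat (n + n') * (s * s') - (r * s' + r' * s) = (of_nat n * s - r) * s' + (of_nat n' * s' - r') * s"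
    by (simp add: algebra_simps)
  have e2: "of_nat (n + n') * (s * s') + (r * s' + r' * s) = (of_nat n * s + r) * s' + (of_nat n' * s' + r') * s"
    by (simp add: algebra_simps)
  have "pos (of_nat (n + n') * (s * s') - (r * s' + r' * s))" unfolding e1
    by (rule pos_add[OF pos_mul[OF a(1) ps(2)] pos_mul[OF a(3) ps(1)]])
  moreover have "pos (of_nat (n + n') * (s * s') + (r * s' + r' * s))" unfolding e2
    by (rule pos_add[OF pos_mul[OF a(2) ps(2)] pos_mul[OF a(4) ps(1)]])
  ultimately have "bnd (r * s' + r' * s) (s * s') (n + n')" unfolding bnd_def by blast
  thus ?thesis using bd_iff Loc_mult s s' by blast
qed

lemma bd_mul:
  assumes "(r, s) \<in> bd_fracs le" "(r', s') \<in> bd_fracs le"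
  shows "(r * r', s * s') \<in> bd_fracs le"
proof -
  obtain n n' where s: "s \<in> Loc le" "bnd r s n" and s': "s' \<in> Loc le" "bnd r' s' n'"
    using assms bd_iff by blast
  have a: "pos (of_nat n * s - r)" "pos (of_nat n * s + r)" "pos (of_nat n' * s' - r')" "pos (of_nat n' * s' + r')"
    using s s' unfolding bnd_def by auto
  have "(of_nat (n * n') * (s * s') - r * r') + (of_nat (n * n') * (s * s') - r * r')
      = (of_nat n * s - r) * (of_nat n' * s' + r') + (of_nat n * s + r) * (of_nat n' * s' - r')"
    by (simp add: algebra_simps)
  moreover have "(of_nat (n * n') * (s * s') + r * r') + (of_nat (n * n') * (s * s') + r * r')
      = (of_nat n * s - r) * (of_nat n' * s' - r') + (of_nat n * s + r) * (of_nat n' * s' + r')"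
    by (simp add: algebra_simps)
  ultimately have "pos ((of_nat (n * n') * (s * s') - r * r') + (of_nat (n * n') * (s * s') - r * r'))"
      "pos ((of_nat (n * n') * (s * s') + r * r') + (of_nat (n * n') * (s * s') + r * r'))"
    using a pos_add pos_mul by auto
  hence "bnd (r * r') (s * s') (n * n')" unfolding bnd_def using two_cancel by blast
  thus ?thesis using bd_iff Loc_mult s s' by blast
qed

lemma bd_neg: "(r, s) \<in> bd_fracs le \<Longrightarrow> (- r, s) \<in> bd_fracs le"
  unfolding bd_iff bnd_def by (auto simp: algebra_simps)

lemma bd_nat: "(of_nat k, 1) \<in> bd_fracs le"
proof -
  have "bnd (of_nat k) 1 (k + k)" unfolding bnd_def
    using pos_nat[of k] pos_nat[of "k + k + k"] by (simp add: algebra_simps)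
  thus ?thesis using bd_iff one_Loc by blast
qed

lemma bd_inv: "s \<in> Loc le \<Longrightarrow> (1, s) \<in> bd_fracs le"
proof -
  assume s: "s \<in> Loc le"
  have "pos (s - 1)" using s unfolding Loc_def by blast
  moreover have "pos (s + 1)" using pos_add[OF Loc_pos[OF s] pos_1] .
  ultimately have "bnd 1 s 1" unfolding bnd_def by simp
  thus ?thesis using bd_iff s by blast
qed

definition CC :: "'a qf set" where
  "CC = {QF r s | r s. (r, s) \<in> bd_fracs le}"

lemma CC_E: "x \<in> CC \<Longrightarrow> \<exists>r s. x = QF r s \<and> (r, s) \<in> bd_fracs le"
  unfolding CC_def by blast

lemma CC_I: "(r, s) \<in> bd_fracs le \<Longrightarrow> QF r s \<in> CC"
  unfolding CC_def by blast

definition TT :: "'a qf set" where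
  "TT = {z \<in> CC. \<exists>r s. z = QF r s \<and> s \<in> Loc le \<and> pos r}"

lemma T_iff:
  assumes "s \<in> Loc le" "s' \<in> Loc le" "QF r s = QF r' s'" "pos r'"
  shows "pos r"
proof -
  have "r * s' = r' * s" using assms eq_qf Loc_nzd by blast
  moreover have "pos (r' * s)" using pos_mul[OF assms(4) Loc_pos[OF assms(1)]] .
  ultimately show ?thesis using Loc_refl[OF assms(2)] by simp
qed

lemma TT_I: "(r, s) \<in> bd_fracs le \<Longrightarrow> pos r \<Longrightarrow> QF r s \<in> TT"
  unfolding TT_def using CC_I bd_iff by blast

lemma TT_E:
  assumes "z \<in> TT" shows "\<exists>r s. z = QF r s \<and> (r, s) \<in> bd_fracs le \<and> pos r"
proof -
  obtain r s where rs: "z = QF r s" "(r, s) \<in> bd_fracs le" using assms CC_E unfolding TT_def by blast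
  obtain r' s' where rs': "z = QF r' s'" "s' \<in> Loc le" "pos r'" using assms unfolding TT_def by blast
  have "pos r" using T_iff[of s s' r r'] rs rs' bd_iff by auto
  thus ?thesis using rs by blast
qed

lemma QF_add: "(r, s) \<in> bd_fracs le \<Longrightarrow> (r', s') \<in> bd_fracs le \<Longrightarrow> QF r s + QF r' s' = QF (r * s' + r' * s) (s * s')"
  using bd_iff Loc_nzd by auto
lemma QF_mul: "(r, s) \<in> bd_fracs le \<Longrightarrow> (r', s') \<in> bd_fracs le \<Longrightarrow> QF r s * QF r' s' = QF (r * r') (s * s')"
  using bd_iff Loc_nzd by auto
lemma QF_neg: "(r, s) \<in> bd_fracs le \<Longrightarrow> - QF r s = QF (- r) s"
  using bd_iff Loc_nzd by auto
lemma QF_nat: "of_nat k = QF (of_nat k) 1"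
  by (rule of_nat_qf)

lemma kd_CT: "kd CC TT"
proof
  show "0 \<in> CC" unfolding CC_def using bd_nat[of 0] by (auto simp: Zero_qf_def)
  show "1 \<in> CC" unfolding CC_def using bd_nat[of 1] by (auto simp: One_qf_def)
  show "x + y \<in> CC" if xC: "x \<in> CC" and yC: "y \<in> CC" for x y
  proof -
    obtain r s where x: "x = QF r s" "(r, s) \<in> bd_fracs le" using CC_E[OF xC] by blast
    obtain r' s' where y: "y = QF r' s'" "(r', s') \<in> bd_fracs le" using CC_E[OF yC] by blast
    show ?thesis using CC_I[OF bd_add[OF x(2) y(2)]] QF_add[OF x(2) y(2)] x(1) y(1) by simp
  qed
  show "- x \<in> CC" if xC: "x \<in> CC" for x
  proof -
    obtain r s where x: "x = QF r s" "(r, s) \<in> bd_fracs le" using CC_E[OF xC] by blast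
    show ?thesis using CC_I[OF bd_neg[OF x(2)]] QF_neg[OF x(2)] x(1) by simp
  qed
  show "x * y \<in> CC" if xC: "x \<in> CC" and yC: "y \<in> CC" for x y
  proof -
    obtain r s where x: "x = QF r s" "(r, s) \<in> bd_fracs le" using CC_E[OF xC] by blast
    obtain r' s' where y: "y = QF r' s'" "(r', s') \<in> bd_fracs le" using CC_E[OF yC] by blast
    show ?thesis using CC_I[OF bd_mul[OF x(2) y(2)]] QF_mul[OF x(2) y(2)] x(1) y(1) by simp
  qed
  show "TT \<subseteq> CC" unfolding TT_def by blast
  show "x + y \<in> TT" if xT: "x \<in> TT" and yT: "y \<in> TT" for x y
  proof -
    obtain r s where x: "x = QF r s" "(r, s) \<in> bd_fracs le" "pos r" using TT_E[OF xT] by blast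
    obtain r' s' where y: "y = QF r' s'" "(r', s') \<in> bd_fracs le" "pos r'" using TT_E[OF yT] by blast
    have ps: "pos s" "pos s'" using x(2) y(2) bd_iff Loc_pos by auto
    have "pos (r * s' + r' * s)" by (rule pos_add[OF pos_mul[OF x(3) ps(2)] pos_mul[OF y(3) ps(1)]])
    thus ?thesis using TT_I[OF bd_add[OF x(2) y(2)]] QF_add[OF x(2) y(2)] x(1) y(1) by simp
  qed
  show "x * y \<in> TT" if xT: "x \<in> TT" and yT: "y \<in> TT" for x y
  proof -
    obtain r s where x: "x = QF r s" "(r, s) \<in> bd_fracs le" "pos r" using TT_E[OF xT] by blast
    obtain r' s' where y: "y = QF r' s'" "(r', s') \<in> bd_fracs le" "pos r'" using TT_E[OF yT] by blast
    have "pos (r * r')" by (rule pos_mul[OF x(3) y(3)])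
    thus ?thesis using TT_I[OF bd_mul[OF x(2) y(2)]] QF_mul[OF x(2) y(2)] x(1) y(1) by simp
  qed
  show "x * x \<in> TT" if xC: "x \<in> CC" for x
  proof -
    obtain r s where x: "x = QF r s" "(r, s) \<in> bd_fracs le" using CC_E[OF xC] by blast
    show ?thesis using TT_I[OF bd_mul[OF x(2) x(2)] pos_sq] QF_mul[OF x(2) x(2)] x(1) by simp
  qed
  show "\<exists>n::nat. of_nat n - x \<in> TT \<and> of_nat n + x \<in> TT" if xC: "x \<in> CC" for x
  proof -
    obtain r s where x: "x = QF r s" "(r, s) \<in> bd_fracs le" using CC_E[OF xC] by blast
    obtain n where n: "bnd r s n" using x(2) bd_iff by blast
    have b1: "(of_nat n * s + (- r) * 1, 1 * s) \<in> bd_fracs le" by (rule bd_add[OF bd_nat bd_neg[OF x(2)]])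
    have b2: "(of_nat n * s + r * 1, 1 * s) \<in> bd_fracs le" by (rule bd_add[OF bd_nat x(2)])
    have "of_nat n - x = of_nat n + - QF r s" using x(1) by simp
    also have "\<dots> = QF (of_nat n) 1 + QF (- r) s" using QF_neg[OF x(2)] QF_nat[of n] by metis
    also have "\<dots> = QF (of_nat n * s + (- r) * 1) (1 * s)" by (rule QF_add[OF bd_nat bd_neg[OF x(2)]])
    finally have e1: "of_nat n - x = QF (of_nat n * s + (- r) * 1) (1 * s)" .
    have "of_nat n + x = QF (of_nat n) 1 + QF r s" using QF_nat[of n] x(1) by simp
    also have "\<dots> = QF (of_nat n * s + r * 1) (1 * s)" by (rule QF_add[OF bd_nat x(2)])
    finally have e2: "of_nat n + x = QF (of_nat n * s + r * 1) (1 * s)" .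
    have "of_nat n - x \<in> TT" unfolding e1 using TT_I[OF b1] n unfolding bnd_def by simp
    moreover have "of_nat n + x \<in> TT" unfolding e2 using TT_I[OF b2] n unfolding bnd_def by simp
    ultimately show ?thesis by blast
  qed
  show "\<exists>v\<in>CC. of_nat k * v = 1" if "k \<ge> 1" for k :: nat
  proof
    have kL: "(of_nat k :: 'a) \<in> Loc le" using nat_Loc that by blast
    show "QF 1 (of_nat k) \<in> CC" using CC_I[OF bd_inv[OF kL]] .
    have "of_nat k * QF 1 (of_nat k :: 'a) = QF (of_nat k) 1 * QF 1 (of_nat k)" by (subst QF_nat[of k]) (rule refl)
    also have "\<dots> = QF (of_nat k * 1) (1 * of_nat k)" by (rule QF_mul[OF bd_nat[of k] bd_inv[OF kL]])
    also have "\<dots> = QF 1 1" by (simp only: mult_1_left mult_1_right, subst eq_qf[OF Loc_nzd[OF kL] nzd_1], simp)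
    also have "\<dots> = 1" by (simp add: One_qf_def)
    finally show "of_nat k * QF 1 (of_nat k :: 'a) = 1" .
  qed
qed

sublocale K: kd CC TT by (rule kd_CT)

definition phi_of :: "('a qf \<Rightarrow> real) \<Rightarrow> ('a \<times> 'a \<Rightarrow> real)" where
  "phi_of \<psi> p = (if p \<in> bd_fracs le then \<psi> (QF (fst p) (snd p)) else 0)"

lemma bd_frac_eq: "p \<in> bd_fracs le \<Longrightarrow> q \<in> bd_fracs le \<Longrightarrow> frac_eq p q \<Longrightarrow> QF (fst p) (snd p) = QF (fst q) (snd q)"
  using bd_iff Loc_nzd eq_qf unfolding frac_eq_def by (metis prod.collapse)

lemma hom_char:
  assumes h: "K.ishom \<psi>"
  shows "phi_of \<psi> \<in> chars le"
proof -
  have add: "\<psi> (x + y) = \<psi> x + \<psi> y" and mul: "\<psi> (x * y) = \<psi> x * \<psi> y"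
    if "x \<in> CC" "y \<in> CC" for x y using h that unfolding K.ishom_def by auto
  have one: "\<psi> 1 = 1" and posT: "\<And>t. t \<in> TT \<Longrightarrow> \<psi> t \<ge> 0" using h unfolding K.ishom_def by auto
  show ?thesis unfolding chars_def
  proof (intro CollectI conjI allI ballI impI)
    show "phi_of \<psi> p = 0" if "p \<notin> bd_fracs le" for p using that by (simp add: phi_of_def)
    show "phi_of \<psi> p = phi_of \<psi> q" if "p \<in> bd_fracs le" "q \<in> bd_fracs le" "frac_eq p q" for p q
      using that bd_frac_eq by (simp add: phi_of_def)
    show "phi_of \<psi> (1, 1) = 1" using bd_nat[of 1] one by (simp add: phi_of_def One_qf_def)
    fix r s r' s' assume b: "(r, s) \<in> bd_fracs le \<and> (r', s') \<in> bd_fracs le"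
    hence b1: "(r, s) \<in> bd_fracs le" and b2: "(r', s') \<in> bd_fracs le" by auto
    show "phi_of \<psi> (r * s' + r' * s, s * s') = phi_of \<psi> (r, s) + phi_of \<psi> (r', s')"
      using bd_add[OF b1 b2] b1 b2 QF_add[OF b1 b2] add[OF CC_I[OF b1] CC_I[OF b2]]
      by (simp add: phi_of_def)
    show "phi_of \<psi> (r * r', s * s') = phi_of \<psi> (r, s) * phi_of \<psi> (r', s')"
      using bd_mul[OF b1 b2] b1 b2 QF_mul[OF b1 b2] mul[OF CC_I[OF b1] CC_I[OF b2]]
      by (simp add: phi_of_def)
  next
    fix p assume p: "p \<in> bd_fracs le" and fl: "frac_le le (0, 1) p"
    obtain r s where rs: "p = (r, s)" by (cases p)
    have "pos r" using fl rs unfolding frac_le_def by simp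
    hence "QF r s \<in> TT" using TT_I p rs by blast
    thus "0 \<le> phi_of \<psi> p" using posT p rs by (simp add: phi_of_def)
  qed
qed

lemma char_hom:
  assumes phi: "\<phi> \<in> chars le"
  shows "\<exists>\<psi>. K.ishom \<psi> \<and> (\<forall>r s. (r, s) \<in> bd_fracs le \<longrightarrow> \<psi> (QF r s) = \<phi> (r, s))"
proof -
  have resp: "\<phi> p = \<phi> q" if "p \<in> bd_fracs le" "q \<in> bd_fracs le" "frac_eq p q" for p q
    using phi that unfolding chars_def by blast
  have one: "\<phi> (1, 1) = 1" using phi unfolding chars_def by blast
  have add: "\<phi> (r * s' + r' * s, s * s') = \<phi> (r, s) + \<phi> (r', s')"
    if "(r, s) \<in> bd_fracs le" "(r', s') \<in> bd_fracs le" for r s r' s'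
    using phi that unfolding chars_def by blast
  have mul: "\<phi> (r * r', s * s') = \<phi> (r, s) * \<phi> (r', s')"
    if "(r, s) \<in> bd_fracs le" "(r', s') \<in> bd_fracs le" for r s r' s'
    using phi that unfolding chars_def by blast
  have pos: "\<phi> p \<ge> 0" if "p \<in> bd_fracs le" "frac_le le (0, 1) p" for p
    using phi that unfolding chars_def by blast
  define \<psi> where "\<psi> z = \<phi> (SOME p. p \<in> bd_fracs le \<and> z = QF (fst p) (snd p))" for z
  have psiQ: "\<psi> (QF r s) = \<phi> (r, s)" if b: "(r, s) \<in> bd_fracs le" for r s
  proof -
    have ex: "\<exists>p. p \<in> bd_fracs le \<and> QF r s = QF (fst p) (snd p)" using b by (intro exI[of _ "(r, s)"]) simp
    define p where "p = (SOME p. p \<in> bd_fracs le \<and> QF r s = QF (fst p) (snd p))"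
    have p: "p \<in> bd_fracs le" "QF r s = QF (fst p) (snd p)" using someI_ex[OF ex] unfolding p_def by blast+
    have "frac_eq p (r, s)"
    proof -
      obtain a c where pa: "p = (a, c)" by (cases p)
      have "c \<in> Loc le" "s \<in> Loc le" using p(1) b pa bd_iff by auto
      hence "a * s = r * c" using p(2) pa eq_qf Loc_nzd by (metis fst_conv snd_conv)
      thus ?thesis using pa unfolding frac_eq_def by simp
    qed
    hence "\<phi> p = \<phi> (r, s)" using resp p(1) b by blast
    thus ?thesis unfolding \<psi>_def p_def by simp
  qed
  have "K.ishom \<psi>" unfolding K.ishom_def
  proof (intro conjI ballI)
    fix x y assume x: "x \<in> CC" and y: "y \<in> CC"
    obtain r s where xr: "x = QF r s" "(r, s) \<in> bd_fracs le" using CC_E[OF x] by blast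
    obtain r' s' where yr: "y = QF r' s'" "(r', s') \<in> bd_fracs le" using CC_E[OF y] by blast
    show "\<psi> (x + y) = \<psi> x + \<psi> y"
      using QF_add[OF xr(2) yr(2)] psiQ[OF bd_add[OF xr(2) yr(2)]] add[OF xr(2) yr(2)] psiQ[OF xr(2)] psiQ[OF yr(2)] xr(1) yr(1)
      by simp
    show "\<psi> (x * y) = \<psi> x * \<psi> y"
      using QF_mul[OF xr(2) yr(2)] psiQ[OF bd_mul[OF xr(2) yr(2)]] mul[OF xr(2) yr(2)] psiQ[OF xr(2)] psiQ[OF yr(2)] xr(1) yr(1)
      by simp
  next
    show "\<psi> 1 = 1" using psiQ[OF bd_nat[of 1]] one by (simp add: One_qf_def)
  next
    fix t assume t: "t \<in> TT"
    obtain r s where rs: "t = QF r s" "(r, s) \<in> bd_fracs le" "pos r" using TT_E[OF t] by blast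
    have "frac_le le (0, 1) (r, s)" using rs(3) unfolding frac_le_def by simp
    thus "\<psi> t \<ge> 0" using pos[OF rs(2)] psiQ[OF rs(2)] rs(1) by simp
  qed
  thus ?thesis using psiQ by blast
qed

lemma qf_one_minus: "nzd u \<Longrightarrow> 1 - of_nat n * QF r u = QF (u - of_nat n * r) u"
  by (simp add: One_qf_def of_nat_qf)

lemma qf_one_plus: "nzd u \<Longrightarrow> 1 + of_nat n * QF r u = QF (u + of_nat n * r) u"
  by (simp add: One_qf_def of_nat_qf)

lemma s0_ex: "\<exists>s. s \<in> Loc le \<and> (r, s) \<in> bd_fracs le"
proof -
  obtain w where w: "w \<in> Loc le" "le (- w) r" "le r w" using lz unfolding localizable_def by blast
  have "bnd r w 1" unfolding bnd_def using w le_sub[of "- w" r] le_sub[of r w] by (simp add: add.commute)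
  thus ?thesis using w bd_iff by blast
qed

lemma ext_gelfand_eq:
  fixes r :: 'a
  defines "s0 \<equiv> SOME s. s \<in> Loc le \<and> (r, s) \<in> bd_fracs le"
  shows "s0 \<in> Loc le" "(r, s0) \<in> bd_fracs le"
    "ext_gelfand le r = (O_fin le s0, \<lambda>\<phi>. inverse (\<phi> (1, s0)) * \<phi> (r, s0))"
  using someI_ex[OF s0_ex[of r]] unfolding s0_def ext_gelfand_def gelfand_rep_def by auto

lemma real_zero_lemma:
  fixes a :: real
  assumes "\<And>n::nat. n \<ge> 1 \<Longrightarrow> real n * a \<le> 1 \<and> - 1 \<le> real n * a"
  shows "a = 0"
proof -
  have "a \<le> 0 + 1 / real M" if "M \<ge> 1" for M :: nat
    using assms[OF that] that by (simp add: le_divide_eq mult.commute)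
  hence "a \<le> 0" by (rule real_limit_le)
  moreover have "- a \<le> 0 + 1 / real M" if "M \<ge> 1" for M :: nat
    using assms[OF that] that by (simp add: le_divide_eq mult.commute)
  hence "- a \<le> 0" by (rule real_limit_le)
  ultimately show ?thesis by simp
qed

lemma hom_one_minus: "K.ishom \<psi> \<Longrightarrow> x \<in> CC \<Longrightarrow> \<psi> (1 - of_nat n * x) = 1 - real n * \<psi> x"
  using K.hom_add[of \<psi> 1 "- (of_nat n * x)"] K.hom_neg[of \<psi> "of_nat n * x"] K.hom_nat_mult[of \<psi> x n]
    K.hom_one[of \<psi>] K.C1 K.Cmul K.Cnat K.Cuminus by simp

lemma hom_one_plus: "K.ishom \<psi> \<Longrightarrow> x \<in> CC \<Longrightarrow> \<psi> (1 + of_nat n * x) = 1 + real n * \<psi> x"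
  using K.hom_add[of \<psi> 1 "of_nat n * x"] K.hom_nat_mult[of \<psi> x n]
    K.hom_one[of \<psi>] K.C1 K.Cmul K.Cnat by simp

lemma kernel_sub:
  assumes rk: "r \<in> gelfand_kernel le"
  shows "\<exists>s. pos s \<and> (\<forall>n::nat. n \<ge> 1 \<longrightarrow> le (- s) (of_nat n * r) \<and> le (of_nat n * r) s)"
proof -
  define s0 where "s0 = (SOME s. s \<in> Loc le \<and> (r, s) \<in> bd_fracs le)"
  have s0: "s0 \<in> Loc le" "(r, s0) \<in> bd_fracs le"
    and ext: "ext_gelfand le r = (O_fin le s0, \<lambda>\<phi>. inverse (\<phi> (1, s0)) * \<phi> (r, s0))"
    using ext_gelfand_eq[of r] unfolding s0_def by auto
  have ap: "approx_eq (D_loc le) (ext_gelfand le r) (chars le, \<lambda>_. 0)"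
    using rk unfolding gelfand_kernel_def by simp
  obtain A where A: "A \<in> D_loc le" "A \<subseteq> O_fin le s0 \<inter> chars le"
    "\<And>\<phi>. \<phi> \<in> A \<Longrightarrow> inverse (\<phi> (1, s0)) * \<phi> (r, s0) = 0"
    using ap unfolding approx_eq_def ext fst_conv snd_conv by blast
  obtain t where t: "t \<in> Loc le" "A = O_fin le t" using A(1) unfolding D_loc_def by blast
  define u where "u = s0 * t"
  have uL: "u \<in> Loc le" unfolding u_def using Loc_mult s0 t by blast
  have bt: "(1, t) \<in> bd_fracs le" using bd_inv t by blast
  define x where "x = QF r u"
  have xeq: "x = QF r s0 * QF 1 t" unfolding x_def u_def using QF_mul[OF s0(2) bt] by simp
  have xC: "x \<in> CC" unfolding xeq using K.Cmul CC_I s0(2) bt by blast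
  have zero: "\<psi> x = 0" if h: "K.ishom \<psi>" for \<psi>
  proof -
    have px: "\<psi> x = \<psi> (QF r s0) * \<psi> (QF 1 t)" unfolding xeq using K.hom_mul[OF h] CC_I s0(2) bt by blast
    have "\<psi> (QF 1 t) \<ge> 0" using K.hom_pos[OF h TT_I[OF bt pos_1]] .
    show ?thesis
    proof (cases "\<psi> (QF 1 t) = 0")
      case True thus ?thesis using px by simp
    next
      case False
      hence gt: "\<psi> (QF 1 t) > 0" using \<open>\<psi> (QF 1 t) \<ge> 0\<close> by simp
      have phiC: "phi_of \<psi> \<in> chars le" using hom_char[OF h] .
      have "phi_of \<psi> (1, t) = \<psi> (QF 1 t)" using bt by (simp add: phi_of_def)
      hence "phi_of \<psi> \<in> A" using t(2) phiC gt unfolding O_fin_def by simp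
      hence "phi_of \<psi> \<in> O_fin le s0" "inverse (phi_of \<psi> (1, s0)) * phi_of \<psi> (r, s0) = 0"
        using A by auto
      hence "phi_of \<psi> (1, s0) > 0" "inverse (phi_of \<psi> (1, s0)) * phi_of \<psi> (r, s0) = 0"
        unfolding O_fin_def by auto
      hence "phi_of \<psi> (r, s0) = 0" by simp
      hence "\<psi> (QF r s0) = 0" using s0(2) by (simp add: phi_of_def)
      thus ?thesis using px by simp
    qed
  qed
  have nzu: "nzd u" using Loc_nzd uL by blast
  have "le (- u) (of_nat n * r) \<and> le (of_nat n * r) u" if n: "n \<ge> 1" for n :: nat
  proof
    show "le (of_nat n * r) u"
    proof (rule ccontr)
      assume nle: "\<not> le (of_nat n * r) u"
      have cC: "1 - of_nat n * x \<in> CC" using K.Cdiff K.C1 K.Cmul K.Cnat xC by blast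
      have "1 - of_nat n * x \<notin> TT"
      proof
        assume "1 - of_nat n * x \<in> TT"
        then obtain a b where ab: "1 - of_nat n * x = QF a b" "(a, b) \<in> bd_fracs le" "pos a" using TT_E by blast
        have "QF (u - of_nat n * r) u = QF a b" using ab(1) qf_one_minus[OF nzu] unfolding x_def by simp
        hence "pos (u - of_nat n * r)" using T_iff[OF uL _ _ ab(3)] ab(2) bd_iff by blast
        thus False using nle le_sub by blast
      qed
      then obtain \<psi> where h: "K.ishom \<psi>" "\<psi> (1 - of_nat n * x) \<le> 0" using K.ishom_exists cC by blast
      thus False using hom_one_minus[OF h(1) xC] zero[OF h(1)] by simp
    qed
    show "le (- u) (of_nat n * r)"
    proof (rule ccontr)
      assume nle: "\<not> le (- u) (of_nat n * r)"
      have cC: "1 + of_nat n * x \<in> CC" using K.Cadd K.C1 K.Cmul K.Cnat xC by blast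
      have "1 + of_nat n * x \<notin> TT"
      proof
        assume "1 + of_nat n * x \<in> TT"
        then obtain a b where ab: "1 + of_nat n * x = QF a b" "(a, b) \<in> bd_fracs le" "pos a" using TT_E by blast
        have "QF (u + of_nat n * r) u = QF a b" using ab(1) qf_one_plus[OF nzu] unfolding x_def by simp
        hence "pos (u + of_nat n * r)" using T_iff[OF uL _ _ ab(3)] ab(2) bd_iff by blast
        thus False using nle le_sub[of "- u" "of_nat n * r"] by (simp add: add.commute)
      qed
      then obtain \<psi> where h: "K.ishom \<psi>" "\<psi> (1 + of_nat n * x) \<le> 0" using K.ishom_exists cC by blast
      thus False using hom_one_plus[OF h(1) xC] zero[OF h(1)] by simp
    qed
  qed
  moreover have "pos u" using Loc_pos uL by blast
  ultimately show ?thesis by blast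
qed

lemma kernel_sup:
  assumes sp: "pos s" and bnds: "\<And>n::nat. n \<ge> 1 \<Longrightarrow> le (- s) (of_nat n * r) \<and> le (of_nat n * r) s"
  shows "r \<in> gelfand_kernel le"
proof -
  define s0 where "s0 = (SOME s. s \<in> Loc le \<and> (r, s) \<in> bd_fracs le)"
  have s0: "s0 \<in> Loc le" "(r, s0) \<in> bd_fracs le"
    and ext: "ext_gelfand le r = (O_fin le s0, \<lambda>\<phi>. inverse (\<phi> (1, s0)) * \<phi> (r, s0))"
    using ext_gelfand_eq[of r] unfolding s0_def by auto
  obtain t where t: "t \<in> Loc le" "le (- t) s" "le s t" using lz unfolding localizable_def by blast
  define u where "u = t * s0"
  have uL: "u \<in> Loc le" unfolding u_def using Loc_mult s0 t by blast
  have bt: "(1, t) \<in> bd_fracs le" and bs0: "(1, s0) \<in> bd_fracs le" using bd_inv t s0 by blast+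
  have pts: "pos (t - s)" "pos (s + t)" using t le_sub[of s t] le_sub[of "- t" s] by (auto simp: add.commute)
  have b1: "le (- s) r" "le r s" using bnds[of 1] by auto
  have prs: "pos (s - r)" "pos (r + s)" using b1 le_sub[of r s] le_sub[of "- s" r] by (auto simp: add.commute)
  have "bnd r t 1" unfolding bnd_def
  proof
    have "t - r = (t - s) + (s - r)" by simp
    thus "pos (of_nat 1 * t - r)" using pos_add[OF pts(1) prs(1)] by simp
    have "t + r = (t - s) + (r + s)" by simp
    thus "pos (of_nat 1 * t + r)" using pos_add[OF pts(1) prs(2)] by simp
  qed
  hence brt: "(r, t) \<in> bd_fracs le" using bd_iff t by blast
  define x where "x = QF r t"
  have xC: "x \<in> CC" unfolding x_def using CC_I brt by blast
  have nzt: "nzd t" using Loc_nzd t by blast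
  have key: "\<phi> \<in> O_fin le s0 \<and> inverse (\<phi> (1, s0)) * \<phi> (r, s0) = 0" if phi: "\<phi> \<in> O_fin le u" for \<phi>
  proof -
    have phiC: "\<phi> \<in> chars le" and phiu: "\<phi> (1, u) > 0" using phi unfolding O_fin_def by auto
    obtain \<psi> where h: "K.ishom \<psi>" and hq: "\<And>a b. (a, b) \<in> bd_fracs le \<Longrightarrow> \<psi> (QF a b) = \<phi> (a, b)"
      using char_hom[OF phiC] by blast
    have "QF 1 t * QF 1 s0 = QF (1 * 1) (t * s0)" using QF_mul[OF bt bs0] .
    hence q1: "QF 1 u = QF 1 t * QF 1 s0" unfolding u_def by simp
    have "\<phi> (1, u) = \<psi> (QF 1 t) * \<psi> (QF 1 s0)"
      using hq[OF bd_inv[OF uL]] q1 K.hom_mul[OF h] CC_I bt bs0 by metis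
    moreover have "\<psi> (QF 1 t) \<ge> 0" "\<psi> (QF 1 s0) \<ge> 0"
      using K.hom_pos[OF h TT_I[OF bt pos_1]] K.hom_pos[OF h TT_I[OF bs0 pos_1]] by auto
    ultimately have pt: "\<psi> (QF 1 t) > 0" and ps0: "\<psi> (QF 1 s0) > 0" using phiu
      by (metis less_eq_real_def mult_zero_left mult_zero_right)+
    have in0: "\<phi> \<in> O_fin le s0" using phiC ps0 hq[OF bs0] unfolding O_fin_def by simp
    have "real n * \<psi> x \<le> 1 \<and> - 1 \<le> real n * \<psi> x" if n: "n \<ge> 1" for n :: nat
    proof
      have bn: "le (- s) (of_nat n * r)" "le (of_nat n * r) s" using bnds[OF n] by auto
      have "pos (s - of_nat n * r)" using bn(2) le_sub by blast
      hence p1: "pos (t - of_nat n * r)" using pos_add[OF pts(1)] by (metis add_diff_eq diff_add_cancel)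
      have "pos (of_nat n * r + s)" using bn(1) le_sub[of "- s"] by simp
      hence p2: "pos (t + of_nat n * r)" using pos_add[OF pts(1)]
        by (metis add.commute add_diff_eq diff_add_cancel)
      have "1 - of_nat n * x \<in> TT" unfolding TT_def
        using K.Cdiff K.C1 K.Cmul K.Cnat xC qf_one_minus[OF nzt] p1 t(1) unfolding x_def by blast
      from K.hom_pos[OF h this] show "real n * \<psi> x \<le> 1" using hom_one_minus[OF h xC] by simp
      have "1 + of_nat n * x \<in> TT" unfolding TT_def
        using K.Cadd K.C1 K.Cmul K.Cnat xC qf_one_plus[OF nzt] p2 t(1) unfolding x_def by blast
      from K.hom_pos[OF h this] show "- 1 \<le> real n * \<psi> x" using hom_one_plus[OF h xC] by simp
    qed
    hence x0: "\<psi> x = 0" by (rule real_zero_lemma)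
    have "QF r s0 * QF 1 t = QF (r * 1) (s0 * t)" using QF_mul[OF s0(2) bt] .
    moreover have "x * QF 1 s0 = QF (r * 1) (t * s0)" unfolding x_def using QF_mul[OF brt bs0] .
    ultimately have "QF r s0 * QF 1 t = x * QF 1 s0" by (simp add: mult.commute)
    hence "\<psi> (QF r s0) * \<psi> (QF 1 t) = \<psi> x * \<psi> (QF 1 s0)"
      using K.hom_mul[OF h] CC_I s0(2) bt bs0 xC by metis
    hence "\<psi> (QF r s0) = 0" using x0 pt by simp
    hence "\<phi> (r, s0) = 0" using hq[OF s0(2)] by simp
    thus ?thesis using in0 by simp
  qed
  have "O_fin le u \<in> D_loc le" unfolding D_loc_def using uL by blast
  moreover have "O_fin le u \<subseteq> O_fin le s0 \<inter> chars le" using key unfolding O_fin_def by auto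
  moreover have "\<forall>\<phi>\<in>O_fin le u. inverse (\<phi> (1, s0)) * \<phi> (r, s0) = 0" using key by blast
  ultimately have "approx_eq (D_loc le) (ext_gelfand le r) (chars le, \<lambda>_. 0)"
    unfolding approx_eq_def ext fst_conv snd_conv by blast
  thus ?thesis unfolding gelfand_kernel_def by simp
qed

end

theorem corollary28:
  fixes le :: "'a::comm_ring_1 \<Rightarrow> 'a \<Rightarrow> bool"
  assumes "po_comm_ring le"
    and "localizable le"
    and "\<forall>n::nat. n \<ge> 1 \<longrightarrow> (of_nat n :: 'a) \<in> Loc le"
  shows "gelfand_kernel le =
    {r. \<exists>s. le 0 s \<and> (\<forall>n::nat. n \<ge> 1 \<longrightarrow> le (- s) (of_nat n * r) \<and> le (of_nat n * r) s)}"
proof -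
  interpret G: gctx le using assms by (unfold_locales) auto
  show ?thesis
  proof (intro set_eqI iffI)
    fix r assume "r \<in> gelfand_kernel le"
    thus "r \<in> {r. \<exists>s. le 0 s \<and> (\<forall>n::nat. n \<ge> 1 \<longrightarrow> le (- s) (of_nat n * r) \<and> le (of_nat n * r) s)}"
      using G.kernel_sub by blast
  next
    fix r assume "r \<in> {r. \<exists>s. le 0 s \<and> (\<forall>n::nat. n \<ge> 1 \<longrightarrow> le (- s) (of_nat n * r) \<and> le (of_nat n * r) s)}"
    then obtain s where "le 0 s" "\<And>n::nat. n \<ge> 1 \<Longrightarrow> le (- s) (of_nat n * r) \<and> le (of_nat n * r) s" by blast
    thus "r \<in> gelfand_kernel le" using G.kernel_sup by blast
  qed
qed

end
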